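(* Let $\rho$ be an admissible function on an RD-space $(\mathcal X,d,\mu)$. There exist a nonnegative function $K_\rho$ on $\mathcal X\times\mathcal X$ and a constant $C>0$ such that: (i) $K_\rho(x,y)=0$ if $d(x,y)>C\min\{\rho(x),\rho(y)\}$, and $K_\rho(x,y)\le C\frac{1}{V_{\rho(x)}(x)+V_{\rho(y)}(y)}$ for all $x,y$; (ii) $K_\rho(x,y)=K_\rho(y,x)$ for all $x,y$; (iii) $|K_\rho(x,y)-K_\rho(x,y')|\le C\frac{d(y,y')}{\rho(x)}\frac{1}{V_{\rho(x)}(x)+V_{\rho(y)}(y)}$ for all $x,y,y'$ with $d(y,y')\le[\rho(x)+d(x,y)]/2$; (iv) $|[K_\rho(x,y)-K_\rho(x,y')]-[K_\rho(x',y)-K_\rho(x',y')]|\le C\frac{d(x,x')}{\rho(x)}\frac{d(y,y')}{\rho(x)}\frac{1}{V_{\rho(x)}(x)+V_{\rho(y)}(y)}$ for all $x,x',y,y'$ with $d(x,x')\le[\rho(y)+d(x,y)]/3$ and $d(y,y')\le[\rho(x)+d(x,y)]/3$; (v) $\int_{\mathcal X}K_\rho(x,y)\,d\mu(x)=1$ for all $y\in\mathcal X$.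
   Context: An RD-space is a triple $(\mathcal X,d,\mu)$ where $(\mathcal X,d)$ is a metric space and $\mu$ a regular Borel measure such that every ball $B(x,r)=\{y:d(x,y)<r\}$ has finite positive measure, $\mu$ is doubling, and there exist constants $0<\kappa\le n$, $C_2\ge1$ with $C_2^{-1}\lambda^\kappa\mu(B(x,r))\le\mu(B(x,\lambda r))\le C_2\lambda^n\mu(B(x,r))$ for all $x$, $0<r<\operatorname{diam}(\mathcal X)/2$, $1\le\lambda<\operatorname{diam}(\mathcal X)/(2r)$; $\mu(\mathcal X)=\infty$. $V_r(x)=\mu(B(x,r))$. A positive function $\rho$ on $\mathcal X$ is admissible if there exist constants $C_3,k_0>0$ such that for all $x,y$, $\rho(y)\le C_3[\rho(x)]^{1/(1+k_0)}[\rho(x)+d(x,y)]^{k_0/(1+k_0)}$. *)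

theory Defs
  imports "HOL-Analysis.Analysis"
begin

text \<open>The underlying metric space is the whole type 'a (class metric_space);
  the diameter may be infinite, so it is taken in the extended reals.\<close>
definition space_diam :: "'a::metric_space itself \<Rightarrow> ereal" where
  "space_diam _ = (SUP p \<in> (UNIV :: ('a \<times> 'a) set). ereal (dist (fst p) (snd p)))"

definition regular_borel :: "'a::metric_space measure \<Rightarrow> bool" where
  "regular_borel \<mu> \<longleftrightarrow> sets \<mu> = sets borel \<and>
     (\<forall>A \<in> sets borel.
        emeasure \<mu> A = (INF U \<in> {U. open U \<and> A \<subseteq> U}. emeasure \<mu> U) \<and>
        emeasure \<mu> A = (SUP K \<in> {K. compact K \<and> K \<subseteq> A}. emeasure \<mu> K))"

definition doubling :: "'a::metric_space measure \<Rightarrow> bool" where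
  "doubling \<mu> \<longleftrightarrow> (\<exists>C. \<forall>x r. r > 0 \<longrightarrow>
      emeasure \<mu> (ball x (2*r)) \<le> ennreal C * emeasure \<mu> (ball x r))"

definition RD_space :: "'a::metric_space measure \<Rightarrow> bool" where
  "RD_space \<mu> \<longleftrightarrow> regular_borel \<mu> \<and>
     (\<forall>x r. r > 0 \<longrightarrow> 0 < emeasure \<mu> (ball x r) \<and> emeasure \<mu> (ball x r) < \<infinity>) \<and>
     doubling \<mu> \<and>
     (\<exists>\<kappa> n C2. 0 < \<kappa> \<and> \<kappa> \<le> n \<and> C2 \<ge> 1 \<and>
        (\<forall>x r lam. 0 < r \<and> ereal r < space_diam TYPE('a) / 2 \<and> 1 \<le> lam \<and>
            ereal lam < space_diam TYPE('a) / ereal (2*r) \<longrightarrow>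
           (1/C2) * lam powr \<kappa> * measure \<mu> (ball x r) \<le> measure \<mu> (ball x (lam*r)) \<and>
           measure \<mu> (ball x (lam*r)) \<le> C2 * lam powr n * measure \<mu> (ball x r))) \<and>
     emeasure \<mu> (space \<mu>) = \<infinity>"

definition V :: "'a::metric_space measure \<Rightarrow> real \<Rightarrow> 'a \<Rightarrow> real" where
  "V \<mu> r x = measure \<mu> (ball x r)"

definition admissible :: "('a::metric_space \<Rightarrow> real) \<Rightarrow> bool" where
  "admissible \<rho> \<longleftrightarrow> (\<forall>x. 0 < \<rho> x) \<and>
     (\<exists>C3 k0. 0 < C3 \<and> 0 < k0 \<and> (\<forall>x y.
        \<rho> y \<le> C3 * (\<rho> x) powr (1/(1+k0)) * (\<rho> x + dist x y) powr (k0/(1+k0))))"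

end

theory Submission
  imports Defs
begin

locale rdsp =
  fixes \<mu> :: "'a::metric_space measure" and \<rho> :: "'a \<Rightarrow> real"
  assumes RD: "RD_space \<mu>" and adm: "admissible \<rho>"
begin

abbreviation mb where "mb x t \<equiv> measure \<mu> (ball x t)"

lemma sets_mu[simp, measurable_cong]: "sets \<mu> = sets borel"
  using RD unfolding RD_space_def regular_borel_def by auto

lemma space_mu[simp]: "space \<mu> = UNIV"
  using sets_eq_imp_space_eq[OF sets_mu] by simp

lemma ball_sets[simp,intro]: "ball x r \<in> sets \<mu>"
  by simp

lemma ball_pos: "r > 0 \<Longrightarrow> 0 < emeasure \<mu> (ball x r)"
  using RD unfolding RD_space_def by auto

lemma ball_fin: "emeasure \<mu> (ball x r) < \<infinity>"
proof (cases "r > 0")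
  case True then show ?thesis using RD unfolding RD_space_def by auto
next
  case False then have "ball x r = {}" by auto
  then have "emeasure \<mu> (ball x r) = 0" by (metis emeasure_empty)
  then show ?thesis by simp
qed

lemma ball_fin'[simp]: "emeasure \<mu> (ball x r) \<noteq> \<infinity>"
  using ball_fin[of x r] by (simp add: less_top)

lemma ball_fin_top[simp]: "emeasure \<mu> (ball x r) = top \<longleftrightarrow> False"
  using ball_fin[of x r] by auto

lemma emeasure_ball: "emeasure \<mu> (ball x r) = ennreal (mb x r)"
  using ball_fin by (simp add: emeasure_eq_ennreal_measure less_top)

lemma mb_pos: "r > 0 \<Longrightarrow> 0 < mb x r"
  using ball_pos[of r x] emeasure_ball[of x r] by simp

lemma mb_nonneg: "0 \<le> mb x r" by simp

lemma ball_fmeas[simp,intro]: "ball x r \<in> fmeasurable \<mu>"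
  using ball_fin by (auto intro: fmeasurableI)

lemma mb_mono: "s \<le> t \<Longrightarrow> mb x s \<le> mb x t"
  by (rule measure_mono_fmeasurable) auto

lemma mb_mono_set: "ball x s \<subseteq> ball y t \<Longrightarrow> mb x s \<le> mb y t"
  by (rule measure_mono_fmeasurable) auto

lemma doubling_ex: "\<exists>D\<ge>1. \<forall>x r. r > 0 \<longrightarrow> mb x (2*r) \<le> D * mb x r"
proof -
  obtain C where C: "\<And>x r. r > 0 \<Longrightarrow> emeasure \<mu> (ball x (2*r)) \<le> ennreal C * emeasure \<mu> (ball x r)"
    using RD unfolding RD_space_def doubling_def by blast
  define D where "D = max C 1"
  have "mb x (2*r) \<le> D * mb x r" if "r > 0" for x r
  proof -
    have "ennreal (mb x (2*r)) \<le> ennreal C * ennreal (mb x r)"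
      using C[OF that, of x] by (simp add: emeasure_ball)
    also have "\<dots> \<le> ennreal D * ennreal (mb x r)"
      by (intro mult_right_mono ennreal_leI) (auto simp: D_def)
    also have "\<dots> = ennreal (D * mb x r)"
      by (simp add: D_def ennreal_mult)
    finally show ?thesis
      by (subst (asm) ennreal_le_iff) (auto simp: D_def)
  qed
  then show ?thesis unfolding D_def by (intro exI[of _ "max C 1"]) auto
qed

definition Dc where "Dc = (SOME D. D \<ge> 1 \<and> (\<forall>x r. r > 0 \<longrightarrow> mb x (2*r) \<le> D * mb x r))"

lemma Dc: "Dc \<ge> 1" "r > 0 \<Longrightarrow> mb x (2*r) \<le> Dc * mb x r"
  using someI_ex[OF doubling_ex] unfolding Dc_def by auto

lemma dbl_pow: "t > 0 \<Longrightarrow> mb x (2^n * t) \<le> Dc^n * mb x t"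
proof (induction n)
  case 0 then show ?case by simp
next
  case (Suc n)
  have "mb x (2^Suc n * t) = mb x (2 * (2^n*t))" by (simp add: algebra_simps)
  also have "\<dots> \<le> Dc * mb x (2^n*t)" using Dc(2)[of "2^n*t" x] Suc by simp
  also have "\<dots> \<le> Dc * (Dc^n * mb x t)" using Suc Dc(1) by (intro mult_left_mono) auto
  finally show ?case by (simp add: algebra_simps)
qed

lemma dbl_const: "\<exists>c\<ge>1. \<forall>x t. t > 0 \<longrightarrow> mb x (M*t) \<le> c * mb x t"
proof -
  obtain n where n: "M < 2^n" using real_arch_pow[of 2 M] by auto
  have "mb x (M*t) \<le> Dc^n * mb x t" if "t > 0" for x t
  proof -
    have "mb x (M*t) \<le> mb x (2^n*t)" using n that by (intro mb_mono) auto
    also have "\<dots> \<le> Dc^n * mb x t" using dbl_pow that by blast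
    finally show ?thesis .
  qed
  moreover have "Dc^n \<ge> 1" using Dc(1) by simp
  ultimately show ?thesis by blast
qed

end

context rdsp begin

lemma sep_card_bound:
  fixes xc :: 'a and R \<delta> :: real
  assumes R: "R > 0" and \<delta>: "0 < \<delta>" "\<delta> \<le> 1"
  shows "\<exists>N::nat. \<forall>F. F \<subseteq> ball xc R \<and> finite F \<and> (\<forall>p\<in>F. \<forall>q\<in>F. p \<noteq> q \<longrightarrow> dist p q \<ge> \<delta>) \<longrightarrow> card F \<le> N"
proof -
  obtain j where j: "4*R/\<delta> < 2^j" using real_arch_pow[of 2 "4*R/\<delta>"] by auto
  define c where "c = mb xc R / Dc^j"
  have c: "c > 0" unfolding c_def using mb_pos[OF R] Dc(1) by auto
  have lb: "c \<le> mb q (\<delta>/2)" if q: "q \<in> ball xc R" for q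
  proof -
    have "mb xc R \<le> mb q (2*R)"
    proof (rule mb_mono_set, rule subsetI)
      fix x assume "x \<in> ball xc R"
      then show "x \<in> ball q (2*R)" using q dist_triangle[of q x xc] by (simp add: dist_commute)
    qed
    also have "\<dots> \<le> mb q (2^j * (\<delta>/2))"
    proof (rule mb_mono)
      have "4*R < 2^j * \<delta>" using j \<delta> by (simp add: field_simps)
      then show "2*R \<le> 2^j * (\<delta>/2)" by simp
    qed
    also have "\<dots> \<le> Dc^j * mb q (\<delta>/2)" using \<delta> by (intro dbl_pow) auto
    finally show ?thesis unfolding c_def using Dc(1) by (simp add: field_simps)
  qed
  define N where "N = nat (ceiling (mb xc (R+1) / c))"
  have "card F \<le> N" if F: "F \<subseteq> ball xc R" "finite F" "\<forall>p\<in>F. \<forall>q\<in>F. p \<noteq> q \<longrightarrow> dist p q \<ge> \<delta>" for F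
  proof -
    have disj: "disjoint_family_on (\<lambda>q. ball q (\<delta>/2)) F"
      unfolding disjoint_family_on_def
    proof (intro ballI impI)
      fix p q assume pq: "p \<in> F" "q \<in> F" "p \<noteq> q"
      show "ball p (\<delta>/2) \<inter> ball q (\<delta>/2) = {}"
      proof (rule ccontr)
        assume "ball p (\<delta>/2) \<inter> ball q (\<delta>/2) \<noteq> {}"
        then obtain z where "dist p z < \<delta>/2" "dist q z < \<delta>/2" by auto
        then have "dist p q < \<delta>" using dist_triangle[of p q z] by (simp add: dist_commute)
        then show False using F(3) pq by force
      qed
    qed
    have "real (card F) * c = (\<Sum>q\<in>F. c)" by simp
    also have "\<dots> \<le> (\<Sum>q\<in>F. mb q (\<delta>/2))" using F lb by (intro sum_mono) auto
    also have "\<dots> = measure \<mu> (\<Union>q\<in>F. ball q (\<delta>/2))"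
      using F disj by (intro measure_finite_Union[symmetric]) (auto simp: ball_fin')
    also have "\<dots> \<le> mb xc (R+1)"
    proof (rule measure_mono_fmeasurable)
      show "(\<Union>q\<in>F. ball q (\<delta>/2)) \<subseteq> ball xc (R+1)"
      proof (intro UN_least subsetI)
        fix q z assume "q \<in> F" "z \<in> ball q (\<delta>/2)"
        then have "dist xc q < R" "dist q z < \<delta>/2" using F by auto
        then show "z \<in> ball xc (R+1)" using \<delta> dist_triangle[of xc z q] by simp
      qed
    qed (use F in auto)
    finally have "real (card F) \<le> mb xc (R+1) / c" using c by (simp add: field_simps)
    then show ?thesis unfolding N_def by linarith
  qed
  then show ?thesis by blast
qed

lemma sep_net:
  fixes x0 :: 'a and R \<delta> :: real
  assumes R: "R > 0" and \<delta>: "0 < \<delta>" "\<delta> \<le> 1"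
  shows "\<exists>F. finite F \<and> (\<forall>y\<in>ball x0 R. \<exists>q\<in>F. dist y q < \<delta>)"
proof -
  define Sep where "Sep F \<longleftrightarrow> F \<subseteq> ball x0 R \<and> finite F \<and> (\<forall>p\<in>F. \<forall>q\<in>F. p \<noteq> q \<longrightarrow> dist p q \<ge> \<delta>)" for F
  obtain N where N0: "\<forall>F. F \<subseteq> ball x0 R \<and> finite F \<and> (\<forall>p\<in>F. \<forall>q\<in>F. p \<noteq> q \<longrightarrow> dist p q \<ge> \<delta>) \<longrightarrow> card F \<le> N"
    using sep_card_bound[OF R \<delta>, where xc=x0] by (elim exE) (rule that)
  have N: "card F \<le> N" if "Sep F" for F using N0 that unfolding Sep_def by blast
  define CS where "CS = card ` {F. Sep F}"
  have "CS \<subseteq> {..N}" using N unfolding CS_def by auto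
  then have fin: "finite CS" by (rule finite_subset) auto
  have "Sep {}" unfolding Sep_def by simp
  then have ne: "CS \<noteq> {}" unfolding CS_def by blast
  have "Max CS \<in> CS" using fin ne by (rule Max_in)
  then obtain F where F: "Sep F" "card F = Max CS" unfolding CS_def by auto
  have mx: "card G \<le> card F" if "Sep G" for G
  proof -
    have "card G \<in> CS" using that unfolding CS_def by blast
    then show ?thesis using Max_ge[OF fin, of "card G"] F(2) by simp
  qed
  have "\<exists>q\<in>F. dist y q < \<delta>" if y: "y \<in> ball x0 R" for y
  proof (rule ccontr)
    assume "\<not> ?thesis"
    then have far: "\<forall>q\<in>F. dist y q \<ge> \<delta>" by (auto simp: not_less)
    have yF: "y \<notin> F"
    proof
      assume "y \<in> F" then have "\<delta> \<le> dist y y" using far by blast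
      then show False using \<delta> by simp
    qed
    have "Sep (insert y F)" unfolding Sep_def
    proof (intro conjI)
      show "insert y F \<subseteq> ball x0 R" using F(1) y unfolding Sep_def by blast
      show "finite (insert y F)" using F(1) unfolding Sep_def by blast
      show "\<forall>p\<in>insert y F. \<forall>q\<in>insert y F. p \<noteq> q \<longrightarrow> \<delta> \<le> dist p q"
      proof (intro ballI impI)
        fix p q assume "p \<in> insert y F" "q \<in> insert y F" "p \<noteq> q"
        then consider "p = y" "q \<in> F" | "q = y" "p \<in> F" | "p \<in> F" "q \<in> F" by blast
        then show "\<delta> \<le> dist p q"
        proof cases
          case 1 then show ?thesis using far by blast
        next
          case 2 then show ?thesis using far by (simp add: dist_commute)
        next
          case 3 then show ?thesis using F(1) \<open>p \<noteq> q\<close> unfolding Sep_def by blast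
        qed
      qed
    qed
    then have "card (insert y F) \<le> card F" by (rule mx)
    moreover have "card (insert y F) = Suc (card F)" using yF F(1) unfolding Sep_def by simp
    ultimately show False by simp
  qed
  moreover have "finite F" using F(1) unfolding Sep_def by blast
  ultimately show ?thesis by blast
qed

lemma separable: "\<exists>Q::'a set. countable Q \<and> (\<forall>x e. e > 0 \<longrightarrow> (\<exists>q\<in>Q. dist x q < e))"
proof -
  fix x0 :: 'a
  define P where "P n k F \<longleftrightarrow> finite F \<and> (\<forall>y\<in>ball x0 (Suc n). \<exists>q\<in>F. dist y q < 1 / Suc k)" for n k :: nat and F
  have ex: "\<exists>F. P n k F" for n k :: nat
    unfolding P_def by (rule sep_net) auto
  define F where "F n k = (SOME F. P n k F)" for n k
  have FP: "P n k (F n k)" for n k unfolding F_def by (rule someI_ex[OF ex])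
  have F: "\<And>n k. finite (F n k)" "\<And>n k y. y \<in> ball x0 (Suc n) \<Longrightarrow> \<exists>q\<in>F n k. dist y q < 1 / Suc k"
    using FP unfolding P_def by auto
  define Q where "Q = (\<Union>n. \<Union>k. F n k)"
  have cF: "countable (F n k)" for n k using F(1) by (rule countable_finite)
  have "countable Q" unfolding Q_def by (simp add: cF)
  moreover have "\<exists>q\<in>Q. dist x q < e" if e: "e > 0" for x e
  proof -
    obtain n :: nat where n: "dist x0 x < n" using reals_Archimedean2 by blast
    obtain k :: nat where k: "inverse (Suc k) < e" using reals_Archimedean[OF e] by blast
    have "x \<in> ball x0 (Suc n)" using n by simp
    then obtain q where q: "q \<in> F n k" "dist x q < 1 / Suc k" using F(2) by blast
    have "q \<in> Q" unfolding Q_def using q(1) by blast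
    moreover have "dist x q < e" using q(2) k by (simp add: inverse_eq_divide)
    ultimately show ?thesis by blast
  qed
  ultimately show ?thesis by blast
qed

lemma dist_meas[measurable]: "(\<lambda>p. dist (fst p) (snd p)) \<in> borel_measurable (\<mu> \<Otimes>\<^sub>M \<mu>)"
proof -
  obtain Q :: "'a set" where Q: "countable Q" "\<And>x e. e > 0 \<Longrightarrow> \<exists>q\<in>Q. dist x q < e"
    using separable by blast
  have "{w \<in> space (\<mu> \<Otimes>\<^sub>M \<mu>). dist (fst w) (snd w) < t} \<in> sets (\<mu> \<Otimes>\<^sub>M \<mu>)" for t
  proof -
    have eq: "{w \<in> space (\<mu> \<Otimes>\<^sub>M \<mu>). dist (fst w) (snd w) < t} =
       (\<Union>q\<in>Q. \<Union>s\<in>\<rat>. ball q s \<times> ball q (t - s))"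
    proof (intro set_eqI iffI)
      fix w assume w: "w \<in> {w \<in> space (\<mu> \<Otimes>\<^sub>M \<mu>). dist (fst w) (snd w) < t}"
      obtain x z where wxz: "w = (x,z)" by (cases w)
      have dt: "dist x z < t" using w wxz by simp
      define e where "e = (t - dist x z)/3"
      have e: "e > 0" using dt unfolding e_def by simp
      obtain q where q: "q \<in> Q" "dist x q < e" using Q(2)[OF e] by blast
      obtain s where s: "s \<in> \<rat>" "dist x q < s" "s < e" using Rats_dense_in_real[OF q(2)] by blast
      have s3: "3 * s < t - dist x z" using s(3) unfolding e_def by simp
      have "dist q z < t - s"
        using dist_triangle[of q z x] dist_commute[of q x] zero_le_dist[of x q] s(2) s3 by linarith
      then have "w \<in> ball q s \<times> ball q (t - s)" using wxz s by (simp add: dist_commute)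
      then show "w \<in> (\<Union>q\<in>Q. \<Union>s\<in>\<rat>. ball q s \<times> ball q (t - s))" using q s by blast
    next
      fix w assume "w \<in> (\<Union>q\<in>Q. \<Union>s\<in>\<rat>. ball q s \<times> ball q (t - s))"
      then obtain q s where "dist q (fst w) < s" "dist q (snd w) < t - s" by (auto simp: mem_Times_iff)
      then have "dist (fst w) (snd w) < t" using dist_triangle[of "fst w" "snd w" q] by (simp add: dist_commute)
      then show "w \<in> {w \<in> space (\<mu> \<Otimes>\<^sub>M \<mu>). dist (fst w) (snd w) < t}" by (simp add: space_pair_measure)
    qed
    have "(\<Union>s\<in>\<rat>. ball q s \<times> ball q (t - s)) \<in> sets (\<mu> \<Otimes>\<^sub>M \<mu>)" for q
      by (rule sets.countable_UN''[OF countable_rat]) (rule pair_measureI; simp)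
    then show ?thesis unfolding eq by (intro sets.countable_UN''[OF Q(1)])
  qed
  then show ?thesis by (subst borel_measurable_iff_less) blast
qed

lemma sigma_fin: "sigma_finite_measure \<mu>"
proof
  fix x0 :: 'a
  show "\<exists>A. countable A \<and> A \<subseteq> sets \<mu> \<and> \<Union> A = space \<mu> \<and> (\<forall>a\<in>A. emeasure \<mu> a \<noteq> \<infinity>)"
  proof (intro exI[of _ "range (\<lambda>n::nat. ball x0 n)"] conjI)
    show "\<Union> (range (\<lambda>n::nat. ball x0 (real n))) = space \<mu>"
      by (auto simp: space_mu) (metis reals_Archimedean2)
  qed (auto simp: ball_fin')
qed

end

lemma powr_core:
  fixes X Y c a :: real
  assumes X: "X > 0" and Y: "Y > 0" and c: "c > 0" and a: "0 < a" "a < 1"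
    and h: "X \<le> c * Y powr a * X powr (1 - a)"
  shows "X \<le> c powr (1/a) * Y"
proof -
  have "X powr a * X powr (1 - a) = X" using X by (simp add: powr_add[symmetric])
  with h have "X powr a * X powr (1 - a) \<le> (c * Y powr a) * X powr (1 - a)" by simp
  then have "X powr a \<le> c * Y powr a" using X by (simp add: mult_le_cancel_right)
  then have "(X powr a) powr (1/a) \<le> (c * Y powr a) powr (1/a)"
    using a X by (intro powr_mono2) auto
  also have "(X powr a) powr (1/a) = X" using a X by (simp add: powr_powr)
  also have "(c * Y powr a) powr (1/a) = c powr (1/a) * Y"
    using a c Y by (simp add: powr_mult powr_powr)
  finally show ?thesis .
qed

lemma ge1_mult: "1 \<le> c \<Longrightarrow> 0 \<le> x \<Longrightarrow> x \<le> c * (x::real)"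
  using mult_right_mono[of 1 c x] by simp

lemma ge1_mult2: "1 \<le> c \<Longrightarrow> 1 \<le> d \<Longrightarrow> 1 \<le> c * (d::real)"
  using mult_mono[of 1 c 1 d] by simp

lemma maxM_le: "0 \<le> x \<Longrightarrow> d \<le> M * x \<Longrightarrow> d \<le> max M 0 * (x::real)"
  using mult_right_mono[OF max.cobounded1[of M 0], of x] by linarith

context rdsp begin

lemma rho_pos[simp]: "0 < \<rho> x"
  using adm unfolding admissible_def by auto

lemma rho_nonneg[simp]: "0 \<le> \<rho> x"
  using rho_pos[of x] by linarith

definition "C3 = (SOME C3. 0 < C3 \<and> (\<exists>k0. 0 < k0 \<and> (\<forall>x y.
        \<rho> y \<le> C3 * (\<rho> x) powr (1/(1+k0)) * (\<rho> x + dist x y) powr (k0/(1+k0)))))"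
definition "k0 = (SOME k0. 0 < k0 \<and> (\<forall>x y.
        \<rho> y \<le> C3 * (\<rho> x) powr (1/(1+k0)) * (\<rho> x + dist x y) powr (k0/(1+k0))))"
definition "ea = 1/(1+k0)"

lemma C3_k0: "0 < C3" "0 < k0" "\<rho> y \<le> C3 * (\<rho> x) powr (1/(1+k0)) * (\<rho> x + dist x y) powr (k0/(1+k0))"
proof -
  have ex: "\<exists>C3. 0 < C3 \<and> (\<exists>k0. 0 < k0 \<and> (\<forall>x y.
        \<rho> y \<le> C3 * (\<rho> x) powr (1/(1+k0)) * (\<rho> x + dist x y) powr (k0/(1+k0))))"
    using adm unfolding admissible_def by blast
  have C: "0 < C3 \<and> (\<exists>k0. 0 < k0 \<and> (\<forall>x y.
        \<rho> y \<le> C3 * (\<rho> x) powr (1/(1+k0)) * (\<rho> x + dist x y) powr (k0/(1+k0))))"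
    unfolding C3_def by (rule someI_ex[OF ex])
  then have K: "0 < k0 \<and> (\<forall>x y.
        \<rho> y \<le> C3 * (\<rho> x) powr (1/(1+k0)) * (\<rho> x + dist x y) powr (k0/(1+k0)))"
    unfolding k0_def by (intro someI_ex[where P = "\<lambda>k0. 0 < k0 \<and> (\<forall>x y.
        \<rho> y \<le> C3 * (\<rho> x) powr (1/(1+k0)) * (\<rho> x + dist x y) powr (k0/(1+k0)))"]) (use C in blast)
  show "0 < C3" "0 < k0" "\<rho> y \<le> C3 * (\<rho> x) powr (1/(1+k0)) * (\<rho> x + dist x y) powr (k0/(1+k0))"
    using C K by auto
qed

lemma ea: "0 < ea" "ea < 1"
  using C3_k0(2) unfolding ea_def by (auto simp: field_simps)

lemma adm_ineq: "\<rho> y \<le> C3 * (\<rho> x) powr ea * (\<rho> x + dist x y) powr (1 - ea)"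
proof -
  have "k0/(1+k0) = 1 - 1/(1+k0)" using C3_k0(2) by (simp add: field_simps)
  then show ?thesis using C3_k0(3)[of y x] unfolding ea_def by simp
qed

lemma weak_adm: "\<rho> y \<le> C3 * (\<rho> x + dist x y)"
proof -
  have px: "0 < \<rho> x + dist x y" using rho_pos[of x] zero_le_dist[of x y] by linarith
  have "\<rho> y \<le> C3 * (\<rho> x) powr ea * (\<rho> x + dist x y) powr (1 - ea)" by (rule adm_ineq)
  also have "\<dots> \<le> C3 * (\<rho> x + dist x y) powr ea * (\<rho> x + dist x y) powr (1 - ea)"
    using ea C3_k0(1) less_imp_le[OF rho_pos[of x]] by (intro mult_right_mono mult_left_mono powr_mono2) auto
  also have "\<dots> = C3 * (\<rho> x + dist x y)"
    using px by (simp add: mult.assoc powr_add[symmetric])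
  finally show ?thesis .
qed

lemma C3_ge1: "C3 \<ge> 1"
proof -
  fix x :: 'a
  have "\<rho> x \<le> C3 * \<rho> x" using weak_adm[of x x] by simp
  then show ?thesis using rho_pos[of x] by (simp add: mult_le_cancel_right1)
qed

lemma sublin:
  assumes "P > 0" "L \<ge> 0" "c > 0" "P + L \<le> c * P powr ea * (P + L) powr (1 - ea)"
  shows "P + L \<le> c powr (1/ea) * P"
  using powr_core[of "P+L" P c ea] assms ea by auto

lemma comp_rho: "\<exists>c\<ge>1. \<forall>u v. dist u v \<le> M * \<rho> u \<longrightarrow> \<rho> v \<le> c * \<rho> u \<and> \<rho> u \<le> c * \<rho> v"
proof -
  define M' where "M' = max M 0"
  define c1 where "c1 = C3 * (1 + M')"
  define c2 where "c2 = (C3 * (1 + M') powr (1 - ea)) powr (1/ea)"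
  have c1: "c1 \<ge> 1" unfolding c1_def using C3_ge1 by (intro ge1_mult2) (auto simp: M'_def)
  have c2: "c2 \<ge> 0" unfolding c2_def by simp
  have "\<rho> v \<le> max c1 c2 * \<rho> u \<and> \<rho> u \<le> max c1 c2 * \<rho> v" if d: "dist u v \<le> M * \<rho> u" for u v
  proof
    have dM: "dist u v \<le> M' * \<rho> u" using d unfolding M'_def
      by (intro maxM_le) (auto intro: less_imp_le)
    have "\<rho> v \<le> C3 * (\<rho> u + dist u v)" by (rule weak_adm)
    also have "\<dots> \<le> C3 * ((1 + M') * \<rho> u)" using dM C3_k0(1) by (intro mult_left_mono) (auto simp: algebra_simps)
    also have "\<dots> = c1 * \<rho> u" unfolding c1_def by simp
    also have "\<dots> \<le> max c1 c2 * \<rho> u" by (intro mult_right_mono) auto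
    finally show "\<rho> v \<le> max c1 c2 * \<rho> u" .
    show "\<rho> u \<le> max c1 c2 * \<rho> v"
    proof (cases "\<rho> u \<le> \<rho> v")
      case True
      have "\<rho> v \<le> max c1 c2 * \<rho> v" using c1 by (intro ge1_mult) (auto intro: less_imp_le)
      then show ?thesis using True by linarith
    next
      case False
      have "\<rho> u \<le> C3 * (\<rho> v) powr ea * (\<rho> v + dist v u) powr (1 - ea)" by (rule adm_ineq)
      also have "\<dots> \<le> C3 * (\<rho> v) powr ea * ((1 + M') * \<rho> u) powr (1 - ea)"
        using False dM ea C3_k0(1) by (intro mult_left_mono powr_mono2) (auto simp: dist_commute algebra_simps)
      also have "\<dots> = (C3 * (1 + M') powr (1 - ea)) * (\<rho> v) powr ea * (\<rho> u) powr (1 - ea)"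
        using M'_def by (simp add: powr_mult)
      finally have "\<rho> u \<le> (C3 * (1 + M') powr (1 - ea)) powr (1/ea) * \<rho> v"
        using C3_k0(1) M'_def by (intro powr_core ea) auto
      moreover have "c2 * \<rho> v \<le> max c1 c2 * \<rho> v" by (intro mult_right_mono) (auto intro: less_imp_le)
      ultimately show ?thesis unfolding c2_def[symmetric] by linarith
    qed
  qed
  moreover have "max c1 c2 \<ge> 1" using c1 by simp
  ultimately show ?thesis by blast
qed

definition r :: "'a \<Rightarrow> real" where "r z = Inf (range (\<lambda>w. \<rho> w + dist z w))"

lemma r_bdd: "bdd_below (range (\<lambda>w. \<rho> w + dist z w))"
  by (rule bdd_belowI[of _ 0]) auto

lemma r_le: "r z \<le> \<rho> w + dist z w"
  unfolding r_def by (rule cInf_lower[OF rangeI r_bdd])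

lemma r_le_rho: "r z \<le> \<rho> z"
  using r_le[of z z] by simp

lemma rho_le_r: "\<rho> z \<le> C3 * r z"
proof -
  have "\<rho> z / C3 \<le> r z" unfolding r_def
  proof (rule cInf_greatest)
    fix t assume "t \<in> range (\<lambda>w. \<rho> w + dist z w)"
    then obtain w where t: "t = \<rho> w + dist z w" by auto
    have "\<rho> z \<le> C3 * (\<rho> w + dist w z)" by (rule weak_adm)
    then show "\<rho> z / C3 \<le> t" using t dist_commute[of w z] by (simp add: pos_divide_le_eq[OF C3_k0(1)] mult.commute)
  qed auto
  then show ?thesis by (simp add: pos_divide_le_eq[OF C3_k0(1)] mult.commute)
qed

lemma r_pos[simp]: "0 < r z"
proof (rule ccontr)
  assume "\<not> 0 < r z"
  then have "C3 * r z \<le> 0" using C3_k0(1) by (simp add: mult_nonneg_nonpos)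
  then show False using rho_le_r[of z] rho_pos[of z] by linarith
qed

lemma r_nonneg[simp]: "0 \<le> r z"
  using r_pos[of z] by linarith

lemma r_lip: "r z \<le> r z' + dist z z'"
proof -
  have "r z - dist z z' \<le> r z'" unfolding r_def[of z']
  proof (rule cInf_greatest)
    fix t assume "t \<in> range (\<lambda>w. \<rho> w + dist z' w)"
    then obtain w where t: "t = \<rho> w + dist z' w" by auto
    have "r z \<le> \<rho> w + dist z w" by (rule r_le)
    then show "r z - dist z z' \<le> t" using t dist_triangle[of z w z'] by linarith
  qed auto
  then show ?thesis by simp
qed

lemma r_cont: "continuous_on UNIV r"
proof (rule lipschitz_on_continuous_on)
  show "1-lipschitz_on UNIV r"
  proof (rule lipschitz_onI)
    fix x y
    have "r x - r y \<le> dist x y" "r y - r x \<le> dist x y"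
      using r_lip[of x y] r_lip[of y x] dist_commute[of x y] by linarith+
    then show "dist (r x) (r y) \<le> 1 * dist x y"
      unfolding dist_real_def by (simp add: abs_le_iff)
  qed simp
qed

lemma r_meas[measurable]: "r \<in> borel_measurable \<mu>"
  by (subst measurable_cong_sets[OF sets_mu refl]) (rule borel_measurable_continuous_onI[OF r_cont])

lemma comp_r: "\<exists>c\<ge>1. \<forall>u v. dist u v \<le> M * r u \<longrightarrow> r v \<le> c * r u \<and> r u \<le> c * r v"
proof -
  obtain c where c: "c \<ge> 1" "\<And>u v. dist u v \<le> max M 0 * \<rho> u \<Longrightarrow> \<rho> v \<le> c * \<rho> u \<and> \<rho> u \<le> c * \<rho> v"
    using comp_rho[of "max M 0"] by blast
  have "r v \<le> (c * C3) * r u \<and> r u \<le> (c * C3) * r v" if d: "dist u v \<le> M * r u" for u v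
  proof -
    have "M * r u \<le> max M 0 * r u" by (rule maxM_le) (auto intro: less_imp_le)
    also have "\<dots> \<le> max M 0 * \<rho> u" using r_le_rho[of u] by (intro mult_left_mono) auto
    finally have "M * r u \<le> max M 0 * \<rho> u" .
    then have "dist u v \<le> max M 0 * \<rho> u" using d by linarith
    then have "\<rho> v \<le> c * \<rho> u \<and> \<rho> u \<le> c * \<rho> v" by (rule c(2))
    moreover have "c * \<rho> u \<le> c * (C3 * r u)" "c * \<rho> v \<le> c * (C3 * r v)"
      using c(1) rho_le_r by (auto intro: mult_left_mono)
    ultimately show ?thesis using r_le_rho[of u] r_le_rho[of v] by (simp add: mult.assoc)
  qed
  moreover have "c * C3 \<ge> 1" using c(1) C3_ge1 by (rule ge1_mult2)
  ultimately show ?thesis by blast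
qed

definition W :: "'a \<Rightarrow> real" where "W u = mb u (r u)"

lemma W_pos[simp]: "0 < W u" unfolding W_def by (rule mb_pos) simp

lemma mb_shift: "mb v s \<le> mb u (dist u v + s)"
proof (rule mb_mono_set, rule subsetI)
  fix x assume "x \<in> ball v s"
  then show "x \<in> ball u (dist u v + s)" using dist_triangle[of u x v] by simp
qed

lemma vol_comp: "\<exists>c\<ge>1. \<forall>u v. dist u v \<le> M * r u \<longrightarrow> W v \<le> c * W u \<and> W u \<le> c * W v"
proof -
  obtain c1 where c1: "c1 \<ge> 1" "\<And>u v. dist u v \<le> M * r u \<Longrightarrow> r v \<le> c1 * r u \<and> r u \<le> c1 * r v"
    using comp_r[of M] by blast
  obtain c2 where c2: "c2 \<ge> 1" "\<And>x t. t > 0 \<Longrightarrow> mb x ((max M 0 + c1) * t) \<le> c2 * mb x t"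
    using dbl_const[of "max M 0 + c1"] by blast
  obtain c3 where c3: "c3 \<ge> 1" "\<And>x t. t > 0 \<Longrightarrow> mb x ((max M 0 * c1 + c1) * t) \<le> c3 * mb x t"
    using dbl_const[of "max M 0 * c1 + c1"] by blast
  have "W v \<le> max c2 c3 * W u \<and> W u \<le> max c2 c3 * W v" if d: "dist u v \<le> M * r u" for u v
  proof
    note cr = c1(2)[OF d]
    have dM: "dist u v \<le> max M 0 * r u" using d by (intro maxM_le) (auto intro: less_imp_le)
    have "W v \<le> mb u (dist u v + r v)" unfolding W_def by (rule mb_shift)
    also have "\<dots> \<le> mb u ((max M 0 + c1) * r u)" using dM cr by (intro mb_mono) (auto simp: algebra_simps)
    also have "\<dots> \<le> c2 * W u" unfolding W_def by (rule c2(2)) simp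
    also have "\<dots> \<le> max c2 c3 * W u" by (intro mult_right_mono) (auto intro: less_imp_le)
    finally show "W v \<le> max c2 c3 * W u" .
    have dM2: "dist v u \<le> max M 0 * c1 * r v"
    proof -
      have "max M 0 * r u \<le> max M 0 * (c1 * r v)" using cr by (intro mult_left_mono) auto
      then show ?thesis using dM by (simp add: dist_commute mult.assoc)
    qed
    have "W u \<le> mb v (dist v u + r u)" unfolding W_def by (rule mb_shift)
    also have "\<dots> \<le> mb v ((max M 0 * c1 + c1) * r v)" using dM2 cr by (intro mb_mono) (auto simp: algebra_simps)
    also have "\<dots> \<le> c3 * W v" unfolding W_def by (rule c3(2)) simp
    also have "\<dots> \<le> max c2 c3 * W v" by (intro mult_right_mono) (auto intro: less_imp_le)
    finally show "W u \<le> max c2 c3 * W v" .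
  qed
  moreover have "max c2 c3 \<ge> 1" using c2 by simp
  ultimately show ?thesis by blast
qed

lemma V_W: "\<exists>c\<ge>1. \<forall>x. W x \<le> V \<mu> (\<rho> x) x \<and> V \<mu> (\<rho> x) x \<le> c * W x"
proof -
  obtain c where c: "c \<ge> 1" "\<And>x t. t > 0 \<Longrightarrow> mb x (C3 * t) \<le> c * mb x t"
    using dbl_const[of C3] by blast
  have "W x \<le> V \<mu> (\<rho> x) x \<and> V \<mu> (\<rho> x) x \<le> c * W x" for x
  proof
    show "W x \<le> V \<mu> (\<rho> x) x" unfolding W_def V_def using r_le_rho[of x] by (rule mb_mono)
    have "V \<mu> (\<rho> x) x \<le> mb x (C3 * r x)" unfolding V_def using rho_le_r[of x] by (rule mb_mono)
    also have "\<dots> \<le> c * W x" unfolding W_def by (rule c(2)) simp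
    finally show "V \<mu> (\<rho> x) x \<le> c * W x" .
  qed
  then show ?thesis using c(1) by blast
qed

end

lemma int_dom:
  fixes f g :: "'b \<Rightarrow> real"
  assumes f: "f \<in> borel_measurable M" and g: "integrable M g" and b: "\<And>z. \<bar>f z\<bar> \<le> g z"
  shows "integrable M f" "\<bar>integral\<^sup>L M f\<bar> \<le> integral\<^sup>L M g"
proof -
  have gn: "0 \<le> g z" for z using b[of z] by linarith
  show fi: "integrable M f"
    by (rule Bochner_Integration.integrable_bound[OF g f]) (use b gn in auto)
  have "\<bar>integral\<^sup>L M f\<bar> = norm (integral\<^sup>L M f)" by simp
  also have "\<dots> \<le> (\<integral>x. norm (f x) \<partial>M)" by (rule integral_norm_bound)
  also have "\<dots> \<le> integral\<^sup>L M g"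
    by (rule integral_mono'[OF g]) (use b gn in auto)
  finally show "\<bar>integral\<^sup>L M f\<bar> \<le> integral\<^sup>L M g" .
qed

lemma int_nonzero_ex:
  fixes f :: "'b \<Rightarrow> real"
  assumes "integral\<^sup>L M f \<noteq> 0"
  shows "\<exists>z. f z \<noteq> 0"
proof (rule ccontr)
  assume "\<not> ?thesis"
  then have "f = (\<lambda>_. 0)" by auto
  then show False using assms by simp
qed

definition phi :: "real \<Rightarrow> real" where "phi t = max 0 (min 1 (2 - 2*t))"

lemma phi_bounds: "0 \<le> phi t" "phi t \<le> 1"
  unfolding phi_def by auto

lemma phi_one: "t \<le> 1/2 \<Longrightarrow> phi t = 1"
  unfolding phi_def by auto

lemma phi_zero: "1 \<le> t \<Longrightarrow> phi t = 0"
  unfolding phi_def by auto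

lemma phi_nz: "phi t \<noteq> 0 \<Longrightarrow> t < 1"
  using phi_zero[of t] by linarith

lemma phi_lip: "\<bar>phi s - phi t\<bar> \<le> 2 * \<bar>s - t\<bar>"
  unfolding phi_def by (auto simp: max_def min_def split: abs_split)

context rdsp begin

definition a :: "'a \<Rightarrow> 'a \<Rightarrow> real" where "a x z = phi (dist x z / r z)"
definition S :: "'a \<Rightarrow> real" where "S x = (\<integral>z. a x z \<partial>\<mu>)"
definition psi :: "'a \<Rightarrow> 'a \<Rightarrow> real" where "psi x z = a x z / S x"
definition m :: "'a \<Rightarrow> real" where "m z = (\<integral>x. psi x z \<partial>\<mu>)"
definition K :: "'a \<Rightarrow> 'a \<Rightarrow> real" where "K x y = (\<integral>z. psi x z * psi y z / m z \<partial>\<mu>)"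

lemma a_bounds[simp]: "0 \<le> a x z" "a x z \<le> 1"
  unfolding a_def by (auto simp: phi_bounds)

lemma a_nz: "a x z \<noteq> 0 \<Longrightarrow> dist x z < r z"
  unfolding a_def using phi_nz r_pos[of z] by (fastforce simp: field_simps)

lemma a_one: "dist x z \<le> r z / 2 \<Longrightarrow> a x z = 1"
  unfolding a_def using r_pos[of z] by (intro phi_one) (simp add: field_simps)

lemma a_lip: "\<bar>a x z - a x' z\<bar> \<le> 2 * dist x x' / r z"
proof -
  have "\<bar>a x z - a x' z\<bar> \<le> 2 * \<bar>dist x z / r z - dist x' z / r z\<bar>"
    unfolding a_def by (rule phi_lip)
  also have "\<bar>dist x z / r z - dist x' z / r z\<bar> = \<bar>dist x z - dist x' z\<bar> / r z"
    using r_pos[of z] by (simp add: diff_divide_distrib[symmetric])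
  also have "\<bar>dist x z - dist x' z\<bar> \<le> dist x x'"
    using dist_triangle[of x z x'] dist_triangle[of x' z x] dist_commute[of x x'] by (simp add: abs_le_iff)
  then have "2 * (\<bar>dist x z - dist x' z\<bar> / r z) \<le> 2 * dist x x' / r z"
    using r_pos[of z] by (simp add: divide_right_mono)
  finally show ?thesis by simp
qed

lemma a_meas: "(\<lambda>p. a (fst p) (snd p)) \<in> borel_measurable (\<mu> \<Otimes>\<^sub>M \<mu>)"
  unfolding a_def phi_def by measurable

lemma a_meas': "(\<lambda>p. a (snd p) (fst p)) \<in> borel_measurable (\<mu> \<Otimes>\<^sub>M \<mu>)"
proof -
  have "(\<lambda>p. a (snd p) (fst p)) = (\<lambda>p. phi (dist (fst p) (snd p) / r (fst p)))"
    unfolding a_def by (simp add: dist_commute)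
  then show ?thesis unfolding phi_def by simp
qed

lemma a_meas_z[measurable]: "a x \<in> borel_measurable \<mu>"
  using measurable_Pair2[OF a_meas, of x] by simp

lemma a_meas_x[measurable]: "(\<lambda>x. a x z) \<in> borel_measurable \<mu>"
  using measurable_Pair2[OF a_meas', of z] by simp

lemma int_ind: "integrable \<mu> (\<lambda>z. B * indicator (ball c R) z :: real)"
  using ball_fin[of c R] by (intro integrable_mult_right integrable_real_indicator) auto

lemma int_ind_eq: "(\<integral>z. B * indicator (ball c R) z \<partial>\<mu>) = B * mb c R"
  by simp

lemma int_ball_bound:
  fixes f :: "'a \<Rightarrow> real"
  assumes f: "f \<in> borel_measurable \<mu>" and b: "\<And>z. \<bar>f z\<bar> \<le> B" and s: "\<And>z. f z \<noteq> 0 \<Longrightarrow> z \<in> ball c R"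
  shows "integrable \<mu> f" "\<bar>integral\<^sup>L \<mu> f\<bar> \<le> B * mb c R"
proof -
  have bd: "\<bar>f z\<bar> \<le> B * indicator (ball c R) z" for z
    using b[of z] s[of z] by (cases "z \<in> ball c R") auto
  show "integrable \<mu> f" by (rule int_dom(1)[OF f int_ind bd])
  show "\<bar>integral\<^sup>L \<mu> f\<bar> \<le> B * mb c R"
    using int_dom(2)[OF f int_ind bd] by simp
qed

lemma int_ball_lower:
  fixes f :: "'a \<Rightarrow> real"
  assumes f: "integrable \<mu> f" and n: "\<And>z. 0 \<le> f z" and l: "\<And>z. z \<in> ball c R \<Longrightarrow> B \<le> f z" and B: "0 \<le> B"
  shows "B * mb c R \<le> integral\<^sup>L \<mu> f"
proof -
  have "(\<integral>z. B * indicator (ball c R) z \<partial>\<mu>) \<le> integral\<^sup>L \<mu> f"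
  proof (rule integral_mono[OF int_ind f])
    fix z show "B * indicator (ball c R) z \<le> f z"
      using l[of z] n[of z] by (cases "z \<in> ball c R") auto
  qed
  then show ?thesis by simp
qed

end

sublocale rdsp \<subseteq> sf: sigma_finite_measure \<mu> by (rule rdsp.sigma_fin) (rule rdsp_axioms)

context rdsp begin

definition cr :: "real \<Rightarrow> real" where
  "cr M = (SOME c. c \<ge> 1 \<and> (\<forall>u v. dist u v \<le> M * r u \<longrightarrow> r v \<le> c * r u \<and> r u \<le> c * r v))"
definition cv :: "real \<Rightarrow> real" where
  "cv M = (SOME c. c \<ge> 1 \<and> (\<forall>u v. dist u v \<le> M * r u \<longrightarrow> W v \<le> c * W u \<and> W u \<le> c * W v))"
definition cd :: "real \<Rightarrow> real" where
  "cd M = (SOME c. c \<ge> 1 \<and> (\<forall>x t. t > 0 \<longrightarrow> mb x (M*t) \<le> c * mb x t))"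

lemma cr: "cr M \<ge> 1" "dist u v \<le> M * r u \<Longrightarrow> r v \<le> cr M * r u" "dist u v \<le> M * r u \<Longrightarrow> r u \<le> cr M * r v"
  using someI_ex[OF comp_r[of M]] unfolding cr_def[symmetric] by auto

lemma cv: "cv M \<ge> 1" "dist u v \<le> M * r u \<Longrightarrow> W v \<le> cv M * W u" "dist u v \<le> M * r u \<Longrightarrow> W u \<le> cv M * W v"
  using someI_ex[OF vol_comp[of M]] unfolding cv_def[symmetric] by auto

lemma cd: "cd M \<ge> 1" "t > 0 \<Longrightarrow> mb x (M*t) \<le> cd M * mb x t"
  using someI_ex[OF dbl_const[of M]] unfolding cd_def[symmetric] by auto

lemma cr_pos[simp]: "0 < cr M" using cr(1)[of M] by linarith
lemma cr_nz[simp]: "cr M \<noteq> 0" using cr(1)[of M] by linarith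
lemma cv_nz[simp]: "cv M \<noteq> 0" using cv(1)[of M] by linarith
lemma cd_nz[simp]: "cd M \<noteq> 0" using cd(1)[of M] by linarith
lemma cr_nn[simp]: "0 \<le> cr M" using cr(1)[of M] by linarith
lemma cv_nn[simp]: "0 \<le> cv M" using cv(1)[of M] by linarith
lemma cd_nn[simp]: "0 \<le> cd M" using cd(1)[of M] by linarith
lemma cv_pos[simp]: "0 < cv M" using cv(1)[of M] by linarith
lemma cd_pos[simp]: "0 < cd M" using cd(1)[of M] by linarith

abbreviation "c1 \<equiv> cr 1"

lemma W_nz[simp]: "W u \<noteq> 0" using W_pos[of u] by linarith
lemma W_nonneg[simp]: "0 \<le> W u" using W_pos[of u] by linarith
lemma r_nz[simp]: "r u \<noteq> 0" using r_pos[of u] by linarith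

lemma a_nz_r: "a x z \<noteq> 0 \<Longrightarrow> r z \<le> c1 * r x \<and> r x \<le> c1 * r z \<and> dist x z < c1 * r x"
proof -
  assume nz: "a x z \<noteq> 0"
  have d: "dist x z < r z" by (rule a_nz[OF nz])
  have d1: "dist z x \<le> 1 * r z" using d by (simp add: dist_commute)
  have "r x \<le> c1 * r z" "r z \<le> c1 * r x" using cr(2)[OF d1] cr(3)[OF d1] by auto
  then show ?thesis using d by auto
qed

lemma a_supp: "a x z \<noteq> 0 \<Longrightarrow> z \<in> ball x (c1 * r x)"
  using a_nz_r by auto

lemma S_int: "integrable \<mu> (a x)"
  by (rule int_ball_bound(1)[where B=1 and c=x and R="c1 * r x"]) (auto dest: a_nz_r)

lemma S_upper0: "S x \<le> mb x (c1 * r x)"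
proof -
  have "\<bar>S x\<bar> \<le> 1 * mb x (c1 * r x)" unfolding S_def
    by (rule int_ball_bound(2)) (auto dest: a_nz_r)
  then show ?thesis by simp
qed

definition "sU = cd c1"
definition "sL = 1 / cd (2 * c1)"

lemma sL_pos[simp]: "0 < sL" unfolding sL_def by simp
lemma sU_pos[simp]: "0 < sU" unfolding sU_def by simp
lemma sL_nn[simp]: "0 \<le> sL" unfolding sL_def by simp
lemma sU_nn[simp]: "0 \<le> sU" unfolding sU_def by simp

lemma S_upper: "S x \<le> sU * W x"
  using S_upper0[of x] cd(2)[where t="r x" and M=c1 and x=x] unfolding sU_def W_def by simp

lemma S_lower: "sL * W x \<le> S x"
proof -
  define t where "t = r x / (2 * c1)"
  have t: "t > 0" unfolding t_def by simp
  have "t \<le> r x" unfolding t_def using cr(1)[of 1] by (simp add: field_simps)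
  have "1 * mb x t \<le> S x" unfolding S_def
  proof (rule int_ball_lower[OF S_int])
    fix z assume z: "z \<in> ball x t"
    then have d1: "dist x z \<le> 1 * r x" using \<open>t \<le> r x\<close> by simp
    have "r x \<le> c1 * r z" by (rule cr(3)[OF d1])
    moreover have "2 * c1 * dist x z < r x" using z cr_pos[of 1] unfolding t_def by (simp add: field_simps)
    moreover have "c1 * (2 * dist x z) = 2 * c1 * dist x z" by simp
    ultimately have "c1 * (2 * dist x z) < c1 * r z" by linarith
    then have "2 * dist x z < r z" using cr_pos[of 1] mult_less_cancel_left_pos by blast
    then have "dist x z \<le> r z / 2" by simp
    then show "1 \<le> a x z" by (simp add: a_one)
  qed auto
  then have A: "cd (2 * c1) * mb x t \<le> cd (2 * c1) * S x" by (intro mult_left_mono) auto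
  have "W x \<le> cd (2 * c1) * mb x t"
    using cd(2)[OF t, where M="2 * c1" and x=x] unfolding W_def t_def by simp
  with A have "W x \<le> cd (2 * c1) * S x" by linarith
  then show ?thesis unfolding sL_def by (simp add: field_simps)
qed

lemma S_pos[simp]: "0 < S x"
  using S_lower[of x] mult_pos_pos[OF sL_pos W_pos[of x]] by linarith

lemma S_nz[simp]: "S x \<noteq> 0" using S_pos[of x] by linarith
lemma S_nonneg[simp]: "0 \<le> S x" using S_pos[of x] by linarith

lemma S_meas[measurable]: "S \<in> borel_measurable \<mu>"
proof -
  have "(\<lambda>x. \<integral>z. a x z \<partial>\<mu>) \<in> borel_measurable \<mu>"
    by (rule sf.borel_measurable_lebesgue_integral) (use a_meas in \<open>simp add: case_prod_beta'\<close>)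
  then show ?thesis unfolding S_def[abs_def] .
qed

lemma psi_nonneg[simp]: "0 \<le> psi x z"
  unfolding psi_def by (simp add: less_imp_le)

lemma psi_le: "psi x z \<le> 1 / (sL * W x)"
proof -
  have "psi x z \<le> 1 / S x" unfolding psi_def using a_bounds(2)[of x z] S_pos[of x]
    by (intro divide_right_mono) (auto simp: less_imp_le)
  also have "\<dots> \<le> 1 / (sL * W x)" using S_lower[of x] by (simp add: frac_le)
  finally show ?thesis .
qed

lemma psi_nz: "psi x z \<noteq> 0 \<Longrightarrow> a x z \<noteq> 0"
  unfolding psi_def by auto

lemma psi_meas: "(\<lambda>p. psi (fst p) (snd p)) \<in> borel_measurable (\<mu> \<Otimes>\<^sub>M \<mu>)"
  unfolding psi_def using a_meas by measurable

lemma psi_meas': "(\<lambda>p. psi (snd p) (fst p)) \<in> borel_measurable (\<mu> \<Otimes>\<^sub>M \<mu>)"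
  unfolding psi_def using a_meas' by measurable

lemma psi_meas_z[measurable]: "psi x \<in> borel_measurable \<mu>"
  using measurable_Pair2[OF psi_meas, of x] by simp

lemma psi_meas_x[measurable]: "(\<lambda>x. psi x z) \<in> borel_measurable \<mu>"
  using measurable_Pair2[OF psi_meas', of z] by simp

lemma psi_int: "integrable \<mu> (psi x)"
  unfolding psi_def by (intro integrable_divide S_int)

lemma psi_int1: "(\<integral>z. psi x z \<partial>\<mu>) = 1"
  unfolding psi_def using S_pos[of x] by (simp add: S_def[symmetric])

abbreviation "cv1 \<equiv> cv 1"

lemma psi_le_z: "psi x z \<le> cv1 / (sL * W z)"
proof (cases "psi x z = 0")
  case True then show ?thesis by simp
next
  case False
  then have "dist x z < r z" using psi_nz a_nz by blast
  then have d1: "dist z x \<le> 1 * r z" by (simp add: dist_commute)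
  have "W z \<le> cv1 * W x" by (rule cv(3)[OF d1])
  have "psi x z \<le> 1 / (sL * W x)" by (rule psi_le)
  also have "\<dots> \<le> cv1 / (sL * W z)"
    using \<open>W z \<le> cv1 * W x\<close> by (simp add: field_simps)
  finally show ?thesis .
qed

lemma m_int: "integrable \<mu> (\<lambda>x. psi x z)"
  by (rule int_ball_bound(1)[where B="cv1 / (sL * W z)" and c=z and R="r z"])
     (use psi_le_z in \<open>auto dest!: psi_nz a_nz simp: dist_commute\<close>)

definition "mU = cv1 / sL"
definition "mL = 1 / (sU * cv1 * cd 2)"

lemma mU_pos[simp]: "0 < mU" unfolding mU_def by simp
lemma mL_pos[simp]: "0 < mL" unfolding mL_def by simp
lemma mU_nn[simp]: "0 \<le> mU" unfolding mU_def by simp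
lemma mL_nn[simp]: "0 \<le> mL" unfolding mL_def by simp

lemma m_upper: "m z \<le> mU"
proof -
  have "\<bar>m z\<bar> \<le> cv1 / (sL * W z) * mb z (r z)" unfolding m_def
    by (rule int_ball_bound(2)) (use psi_le_z in \<open>auto dest!: psi_nz a_nz simp: dist_commute\<close>)
  then show ?thesis unfolding mU_def W_def[symmetric] by simp
qed

lemma m_lower: "mL \<le> m z"
proof -
  have B: "0 \<le> 1 / (sU * cv1 * W z)" by simp
  have "1 / (sU * cv1 * W z) * mb z (r z / 2) \<le> m z" unfolding m_def
  proof (rule int_ball_lower[OF m_int _ _ B])
    fix x assume x: "x \<in> ball z (r z / 2)"
    then have "dist x z \<le> r z / 2" by (simp add: dist_commute)
    then have a1: "a x z = 1" by (rule a_one)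
    have "dist z x < r z / 2" using x by simp
    then have d1: "dist z x \<le> 1 * r z" using r_pos[of z] by linarith
    have "W x \<le> cv1 * W z" by (rule cv(2)[OF d1])
    have "S x \<le> sU * (cv1 * W z)" using S_upper[of x] mult_left_mono[OF \<open>W x \<le> cv1 * W z\<close> sU_nn]
      by linarith
    then show "1 / (sU * cv1 * W z) \<le> psi x z" unfolding psi_def a1 using S_pos[of x]
      by (simp add: frac_le mult.assoc)
  qed simp
  moreover have "W z \<le> cd 2 * mb z (r z / 2)" using cd(2)[where t="r z / 2" and M=2 and x=z] unfolding W_def by simp
  then have "W z / cd 2 \<le> mb z (r z / 2)" by (simp add: pos_divide_le_eq mult.commute)
  then have "1 / (sU * cv1 * W z) * (W z / cd 2) \<le> 1 / (sU * cv1 * W z) * mb z (r z / 2)"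
    by (rule mult_left_mono) simp
  moreover have "1 / (sU * cv1 * W z) * (W z / cd 2) = mL" unfolding mL_def by (simp add: field_simps)
  ultimately show ?thesis by linarith
qed

lemma m_pos[simp]: "0 < m z" using m_lower[of z] mL_pos by linarith
lemma m_nz[simp]: "m z \<noteq> 0" using m_pos[of z] by linarith
lemma m_nonneg[simp]: "0 \<le> m z" using m_pos[of z] by linarith

lemma m_meas[measurable]: "m \<in> borel_measurable \<mu>"
proof -
  have "(\<lambda>z. \<integral>x. psi x z \<partial>\<mu>) \<in> borel_measurable \<mu>"
    by (rule sf.borel_measurable_lebesgue_integral) (use psi_meas' in \<open>simp add: case_prod_beta'\<close>)
  then show ?thesis unfolding m_def[abs_def] .
qed

end

context rdsp begin

lemma int_psi_h:
  assumes h: "h \<in> borel_measurable \<mu>" and b: "\<And>z. \<bar>h z\<bar> \<le> B"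
  shows "integrable \<mu> (\<lambda>z. psi x z * h z)" "\<bar>\<integral>z. psi x z * h z \<partial>\<mu>\<bar> \<le> B"
proof -
  have bd: "\<bar>psi x z * h z\<bar> \<le> B * psi x z" for z
    using mult_left_mono[OF b[of z] psi_nonneg[of x z]] by (simp add: abs_mult mult.commute)
  have gi: "integrable \<mu> (\<lambda>z. B * psi x z)" using psi_int[of x] by simp
  have m: "(\<lambda>z. psi x z * h z) \<in> borel_measurable \<mu>" using h by measurable
  show "integrable \<mu> (\<lambda>z. psi x z * h z)" by (rule int_dom(1)[OF m gi bd])
  have "\<bar>\<integral>z. psi x z * h z \<partial>\<mu>\<bar> \<le> (\<integral>z. B * psi x z \<partial>\<mu>)" by (rule int_dom(2)[OF m gi bd])
  also have "\<dots> = B" using psi_int1[of x] by simp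
  finally show "\<bar>\<integral>z. psi x z * h z \<partial>\<mu>\<bar> \<le> B" .
qed

definition "kB = 1 / (sL * mL)"

lemma kB_pos[simp]: "0 < kB" unfolding kB_def by simp

lemma h_bound: "\<bar>psi y z / m z\<bar> \<le> kB / W y"
proof -
  have "psi y z / m z \<le> (1 / (sL * W y)) / mL"
    using psi_le[of y z] m_lower[of z] by (intro frac_le) auto
  then show ?thesis unfolding kB_def by (simp add: field_simps)
qed

lemma K_alt: "K x y = (\<integral>z. psi x z * (psi y z / m z) \<partial>\<mu>)"
  unfolding K_def by simp

lemma K_int: "integrable \<mu> (\<lambda>z. psi x z * (psi y z / m z))"
  by (rule int_psi_h(1)[OF _ h_bound]) measurable

lemma K_int': "integrable \<mu> (\<lambda>z. psi x z * psi y z / m z)"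
  using K_int[of x y] by simp

lemma K_nonneg[simp]: "0 \<le> K x y"
  unfolding K_def by (rule Bochner_Integration.integral_nonneg) simp

lemma K_sym: "K x y = K y x"
  unfolding K_def by (simp add: mult.commute)

lemma K_upper: "K x y \<le> kB / W y"
proof -
  have "\<bar>\<integral>z. psi x z * (psi y z / m z) \<partial>\<mu>\<bar> \<le> kB / W y"
    by (rule int_psi_h(2)[where h="\<lambda>z. psi y z / m z"]) (use h_bound in auto)
  then show ?thesis unfolding K_alt by simp
qed

lemma K_upper': "K x y \<le> kB / W x"
  using K_upper[of y x] K_sym[of x y] by simp

lemma K_supp: "K x y \<noteq> 0 \<Longrightarrow> dist x y < 2 * c1 * r x \<and> dist x y < 2 * c1 * r y"
proof -
  assume "K x y \<noteq> 0"
  then obtain z where "psi x z * psi y z / m z \<noteq> 0" unfolding K_def using int_nonzero_ex by blast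
  then have ax: "a x z \<noteq> 0" and ay: "a y z \<noteq> 0" using psi_nz by auto
  from a_nz_r[OF ax] a_nz_r[OF ay] a_nz[OF ax] a_nz[OF ay]
  have "dist x z < r z" "dist y z < r z" "r z \<le> c1 * r x" "r z \<le> c1 * r y" by auto
  moreover have "dist x y \<le> dist x z + dist y z" using dist_triangle[of x y z] by (simp add: dist_commute)
  ultimately show ?thesis by linarith
qed

lemma K_meas[measurable]: "(\<lambda>x. K x y) \<in> borel_measurable \<mu>"
proof -
  have "(\<lambda>p. psi (fst p) (snd p) * psi y (snd p) / m (snd p)) \<in> borel_measurable (\<mu> \<Otimes>\<^sub>M \<mu>)"
    using psi_meas by measurable
  then have "(\<lambda>x. \<integral>z. psi x z * psi y z / m z \<partial>\<mu>) \<in> borel_measurable \<mu>"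
    by (intro sf.borel_measurable_lebesgue_integral) (simp add: case_prod_beta')
  then show ?thesis unfolding K_def .
qed

lemma K_total: "(\<integral>\<^sup>+ x. ennreal (K x y) \<partial>\<mu>) = 1"
proof -
  interpret pf: pair_sigma_finite \<mu> \<mu>
    by (intro pair_sigma_finite.intro sigma_fin)
  define G where "G x z = psi x z * psi y z / m z" for x z
  have Gn: "0 \<le> G x z" for x z unfolding G_def by simp
  have Gm: "(\<lambda>(x, z). ennreal (G x z)) \<in> borel_measurable (\<mu> \<Otimes>\<^sub>M \<mu>)"
  proof -
    have "(\<lambda>p. psi (fst p) (snd p) * psi y (snd p) / m (snd p)) \<in> borel_measurable (\<mu> \<Otimes>\<^sub>M \<mu>)"
      using psi_meas by measurable
    then show ?thesis unfolding G_def by (simp add: case_prod_beta')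
  qed
  have "(\<integral>\<^sup>+ x. ennreal (K x y) \<partial>\<mu>) = (\<integral>\<^sup>+ x. (\<integral>\<^sup>+ z. ennreal (G x z) \<partial>\<mu>) \<partial>\<mu>)"
  proof (rule nn_integral_cong)
    fix x
    show "ennreal (K x y) = (\<integral>\<^sup>+ z. ennreal (G x z) \<partial>\<mu>)"
      unfolding K_def G_def by (rule nn_integral_eq_integral[symmetric]) (use K_int' in auto)
  qed
  also have "\<dots> = (\<integral>\<^sup>+ z. (\<integral>\<^sup>+ x. ennreal (G x z) \<partial>\<mu>) \<partial>\<mu>)"
    by (rule pf.Fubini'[symmetric]) (rule Gm)
  also have "\<dots> = (\<integral>\<^sup>+ z. ennreal (psi y z) \<partial>\<mu>)"
  proof (rule nn_integral_cong)
    fix z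
    have ig: "integrable \<mu> (\<lambda>x. psi x z * (psi y z / m z))" using m_int[of z] by simp
    have "(\<integral>\<^sup>+ x. ennreal (G x z) \<partial>\<mu>) = ennreal (\<integral>x. psi x z * (psi y z / m z) \<partial>\<mu>)"
      unfolding G_def by (subst nn_integral_eq_integral[symmetric]) (use ig in \<open>auto simp: mult.assoc\<close>)
    also have "(\<integral>x. psi x z * (psi y z / m z) \<partial>\<mu>) = m z * (psi y z / m z)"
      unfolding m_def by simp
    also have "\<dots> = psi y z" by simp
    finally show "(\<integral>\<^sup>+ x. ennreal (G x z) \<partial>\<mu>) = ennreal (psi y z)" .
  qed
  also have "\<dots> = ennreal (\<integral>z. psi y z \<partial>\<mu>)"
    by (rule nn_integral_eq_integral) (use psi_int in auto)
  also have "\<dots> = 1" by (simp add: psi_int1)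
  finally show ?thesis .
qed

end

context rdsp begin

definition "R1 = 1 + c1 * c1"

lemma R1_ge1: "1 \<le> R1" unfolding R1_def by simp
lemma R1_pos[simp]: "0 < R1" using R1_ge1 by linarith
lemma R1_nn[simp]: "0 \<le> R1" using R1_ge1 by linarith

lemma c1sq_ge: "c1 \<le> c1 * c1"
  using cr(1)[of 1] ge1_mult[of c1 c1] by simp

lemma da_supp:
  assumes d: "dist y y' \<le> r y" and nz: "a y z \<noteq> 0 \<or> a y' z \<noteq> 0"
  shows "dist y z < R1 * r y" "r y \<le> c1 * c1 * r z"
proof -
  have d1: "dist y y' \<le> 1 * r y" using d by simp
  have ry': "r y' \<le> c1 * r y" "r y \<le> c1 * r y'" using cr(2)[OF d1] cr(3)[OF d1] by auto
  have "dist y z < R1 * r y \<and> r y \<le> c1 * c1 * r z"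
  proof (cases "a y z \<noteq> 0")
    case True
    from a_nz_r[OF True] have "dist y z < c1 * r y" "r y \<le> c1 * r z" by auto
    moreover have "c1 * r y \<le> R1 * r y" unfolding R1_def by (rule mult_right_mono) (use c1sq_ge in linarith, simp)
    moreover have "c1 * r z \<le> c1 * c1 * r z" using c1sq_ge by (intro mult_right_mono) auto
    ultimately show ?thesis by linarith
  next
    case False
    then have ay': "a y' z \<noteq> 0" using nz by auto
    from a_nz_r[OF ay'] have h: "dist y' z < c1 * r y'" "r y' \<le> c1 * r z" by auto
    have "c1 * r y' \<le> c1 * (c1 * r y)" using ry' by (intro mult_left_mono) auto
    then have "dist y' z < c1 * (c1 * r y)" using h by linarith
    then have "dist y' z < c1 * c1 * r y" by (simp add: mult.assoc)
    moreover have "dist y z \<le> dist y y' + dist y' z" by (rule dist_triangle)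
    ultimately have "dist y z < R1 * r y" using d unfolding R1_def by (simp add: algebra_simps)
    moreover have "c1 * r y' \<le> c1 * (c1 * r z)" using h by (intro mult_left_mono) auto
    then have "r y \<le> c1 * (c1 * r z)" using ry' by linarith
    then have "r y \<le> c1 * c1 * r z" by (simp add: mult.assoc)
    ultimately show ?thesis by simp
  qed
  then show "dist y z < R1 * r y" "r y \<le> c1 * c1 * r z" by auto
qed

lemma da_bound:
  assumes d: "dist y y' \<le> r y"
  shows "\<bar>a y z - a y' z\<bar> \<le> 2 * (c1 * c1) * dist y y' / r y"
proof (cases "a y z \<noteq> 0 \<or> a y' z \<noteq> 0")
  case False then show ?thesis by simp
next
  case True
  have rz: "r y \<le> c1 * c1 * r z" by (rule da_supp(2)[OF d True])
  have "\<bar>a y z - a y' z\<bar> \<le> 2 * dist y y' / r z" by (rule a_lip)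
  also have "\<dots> \<le> 2 * dist y y' / (r y / (c1 * c1))"
  proof (rule divide_left_mono)
    show "r y / (c1 * c1) \<le> r z" using rz by (simp add: pos_divide_le_eq mult.commute)
  qed auto
  also have "\<dots> = 2 * (c1 * c1) * dist y y' / r y" by (simp add: field_simps)
  finally show ?thesis .
qed

lemma dS_bound:
  assumes d: "dist y y' \<le> r y"
  shows "\<bar>S y - S y'\<bar> \<le> 2 * (c1 * c1) * dist y y' / r y * (cd R1 * W y)"
proof -
  have "S y - S y' = (\<integral>z. a y z - a y' z \<partial>\<mu>)"
    unfolding S_def by (rule Bochner_Integration.integral_diff[symmetric]) (rule S_int)+
  also have "\<bar>\<dots>\<bar> \<le> 2 * (c1 * c1) * dist y y' / r y * mb y (R1 * r y)"
  proof (rule int_ball_bound(2))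
    show "(\<lambda>z. a y z - a y' z) \<in> borel_measurable \<mu>" by measurable
    show "\<bar>a y z - a y' z\<bar> \<le> 2 * (c1 * c1) * dist y y' / r y" for z by (rule da_bound[OF d])
    show "z \<in> ball y (R1 * r y)" if "a y z - a y' z \<noteq> 0" for z
      using da_supp(1)[OF d] that by auto
  qed
  also have "mb y (R1 * r y) \<le> cd R1 * W y" unfolding W_def by (rule cd(2)) simp
  then have "2 * (c1 * c1) * dist y y' / r y * mb y (R1 * r y) \<le> 2 * (c1 * c1) * dist y y' / r y * (cd R1 * W y)"
    by (intro mult_left_mono) auto
  finally show ?thesis .
qed

definition "pL = 2 * (c1 * c1) / sL + 2 * (c1 * c1) * cd R1 * cv1 / (sL * sL)"

lemma pL_pos[simp]: "0 < pL" unfolding pL_def by (intro add_pos_pos divide_pos_pos mult_pos_pos) auto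
lemma pL_nn[simp]: "0 \<le> pL" unfolding pL_def by simp

lemma dpsi_supp:
  assumes d: "dist y y' \<le> r y" and nz: "psi y z - psi y' z \<noteq> 0"
  shows "dist y z < R1 * r y"
proof -
  have "a y z \<noteq> 0 \<or> a y' z \<noteq> 0" using nz unfolding psi_def by auto
  then show ?thesis by (rule da_supp(1)[OF d])
qed

lemma dpsi_bound:
  assumes d: "dist y y' \<le> r y"
  shows "\<bar>psi y z - psi y' z\<bar> \<le> pL * dist y y' / (r y * W y)"
proof -
  define D where "D = dist y y'"
  have D: "0 \<le> D" unfolding D_def by simp
  have d1: "dist y y' \<le> 1 * r y" using d by simp
  have Wy: "W y \<le> cv1 * W y'" by (rule cv(3)[OF d1])
  have eq: "psi y z - psi y' z = (a y z - a y' z) / S y + a y' z * (S y' - S y) / (S y * S y')"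
    unfolding psi_def by (simp add: field_simps)
  have T1: "\<bar>(a y z - a y' z) / S y\<bar> \<le> (2 * (c1 * c1) * D / r y) / (sL * W y)"
  proof -
    have "\<bar>(a y z - a y' z) / S y\<bar> = \<bar>a y z - a y' z\<bar> / S y" by simp
    also have "\<dots> \<le> (2 * (c1 * c1) * D / r y) / (sL * W y)"
      using da_bound[OF d, of z] S_lower[of y] unfolding D_def by (intro frac_le) auto
    finally show ?thesis .
  qed
  have Sy': "sL * W y / cv1 \<le> S y'"
  proof -
    have "sL * W y / cv1 \<le> sL * W y'" using Wy by (simp add: field_simps)
    then show ?thesis using S_lower[of y'] by linarith
  qed
  have SS: "(sL * W y) * (sL * W y / cv1) \<le> S y * S y'"
    using S_lower[of y] Sy' by (intro mult_mono) auto
  have T2: "\<bar>a y' z * (S y' - S y) / (S y * S y')\<bar> \<le>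
      (2 * (c1 * c1) * D / r y * (cd R1 * W y)) / ((sL * W y) * (sL * W y / cv1))"
  proof -
    have n: "\<bar>a y' z * (S y' - S y)\<bar> \<le> 2 * (c1 * c1) * D / r y * (cd R1 * W y)"
    proof -
      have "\<bar>a y' z * (S y' - S y)\<bar> = a y' z * \<bar>S y - S y'\<bar>" by (simp add: abs_mult abs_minus_commute)
      also have "\<dots> \<le> 1 * \<bar>S y - S y'\<bar>" by (intro mult_right_mono) auto
      also have "\<dots> \<le> 2 * (c1 * c1) * D / r y * (cd R1 * W y)" using dS_bound[OF d] unfolding D_def by simp
      finally show ?thesis .
    qed
    have "\<bar>a y' z * (S y' - S y) / (S y * S y')\<bar> = \<bar>a y' z * (S y' - S y)\<bar> / (S y * S y')"
      by (simp add: abs_mult)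
    also have "\<dots> \<le> (2 * (c1 * c1) * D / r y * (cd R1 * W y)) / ((sL * W y) * (sL * W y / cv1))"
      using n SS by (intro frac_le) (auto simp: D)
    finally show ?thesis .
  qed
  have "\<bar>psi y z - psi y' z\<bar> \<le> (2 * (c1 * c1) * D / r y) / (sL * W y)
      + (2 * (c1 * c1) * D / r y * (cd R1 * W y)) / ((sL * W y) * (sL * W y / cv1))"
    unfolding eq using T1 T2 abs_triangle_ineq[of "(a y z - a y' z) / S y" "a y' z * (S y' - S y) / (S y * S y')"]
    by linarith
  also have "\<dots> = pL * D / (r y * W y)"
    unfolding pL_def by (simp add: field_simps)
  finally show ?thesis unfolding D_def .
qed

end

context rdsp begin

definition "R2 = cr R1 + R1"
definition "R3 = R1 * (cr R1 * cr R1 + 1)"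
definition "kL = pL / mL"
definition "kM = pL * pL * cd R1 / mL"

lemma kB_nn[simp]: "0 \<le> kB" using kB_pos by linarith
lemma kL_nn[simp]: "0 \<le> kL" unfolding kL_def by simp
lemma kM_nn[simp]: "0 \<le> kM" unfolding kM_def by simp

lemma h_diff_bound:
  assumes d: "dist y y' \<le> r y"
  shows "\<bar>(psi y z - psi y' z) / m z\<bar> \<le> (pL * dist y y' / (r y * W y)) / mL"
proof -
  have "\<bar>(psi y z - psi y' z) / m z\<bar> = \<bar>psi y z - psi y' z\<bar> / m z" by simp
  also have "\<dots> \<le> (pL * dist y y' / (r y * W y)) / mL"
    using dpsi_bound[OF d, of z] m_lower[of z] by (intro frac_le) auto
  finally show ?thesis .
qed

lemma K_diff_eq: "K x y - K x y' = (\<integral>z. psi x z * ((psi y z - psi y' z) / m z) \<partial>\<mu>)"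
proof -
  have "K x y - K x y' = (\<integral>z. psi x z * (psi y z / m z) - psi x z * (psi y' z / m z) \<partial>\<mu>)"
    unfolding K_alt by (rule Bochner_Integration.integral_diff[symmetric]) (rule K_int)+
  also have "\<dots> = (\<integral>z. psi x z * ((psi y z - psi y' z) / m z) \<partial>\<mu>)"
    by (rule Bochner_Integration.integral_cong) (auto simp: diff_divide_distrib right_diff_distrib)
  finally show ?thesis .
qed

lemma KL:
  assumes d: "dist y y' \<le> r y"
  shows "\<bar>K x y - K x y'\<bar> \<le> kL * dist y y' / (r y * W y)"
    and "K x y - K x y' \<noteq> 0 \<Longrightarrow> dist x y < R2 * r y"
proof -
  have "\<bar>K x y - K x y'\<bar> \<le> (pL * dist y y' / (r y * W y)) / mL"
    unfolding K_diff_eq by (rule int_psi_h(2)) (use h_diff_bound[OF d] in auto)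
  then show "\<bar>K x y - K x y'\<bar> \<le> kL * dist y y' / (r y * W y)" unfolding kL_def by (simp add: field_simps)
next
  assume "K x y - K x y' \<noteq> 0"
  then obtain z where "psi x z * ((psi y z - psi y' z) / m z) \<noteq> 0"
    unfolding K_diff_eq using int_nonzero_ex by blast
  then have px: "psi x z \<noteq> 0" and dp: "psi y z - psi y' z \<noteq> 0" by auto
  have dyz: "dist y z < R1 * r y" by (rule dpsi_supp[OF d dp])
  have dxz: "dist x z < r z" using px psi_nz a_nz by blast
  have "r z \<le> cr R1 * r y" using dyz by (intro cr(2)) simp
  moreover have "dist x y \<le> dist x z + dist y z" using dist_triangle[of x y z] by (simp add: dist_commute)
  ultimately show "dist x y < R2 * r y" using dyz dxz unfolding R2_def by (simp add: algebra_simps)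
qed

lemma KM:
  assumes dx: "dist x x' \<le> r x" and dy: "dist y y' \<le> r y"
  shows "\<bar>K x y - K x y' - K x' y + K x' y'\<bar> \<le> kM * dist x x' * dist y y' / (r x * r y * W y)"
    and "K x y - K x y' - K x' y + K x' y' \<noteq> 0 \<Longrightarrow> dist x y < R3 * r y"
proof -
  define h where "h z = (psi y z - psi y' z) / m z" for z
  have hm: "h \<in> borel_measurable \<mu>" unfolding h_def by measurable
  have eq: "K x y - K x y' - K x' y + K x' y' = (\<integral>z. (psi x z - psi x' z) * h z \<partial>\<mu>)"
  proof -
    have hb: "\<bar>h z\<bar> \<le> (pL * dist y y' / (r y * W y)) / mL" for z
      unfolding h_def by (rule h_diff_bound[OF dy])
    have i1: "integrable \<mu> (\<lambda>z. psi x z * h z)" "integrable \<mu> (\<lambda>z. psi x' z * h z)"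
      using int_psi_h(1)[OF hm hb] by auto
    have "K x y - K x y' - K x' y + K x' y' = (K x y - K x y') - (K x' y - K x' y')" by simp
    also have "\<dots> = (\<integral>z. psi x z * h z \<partial>\<mu>) - (\<integral>z. psi x' z * h z \<partial>\<mu>)"
      unfolding K_diff_eq h_def ..
    also have "\<dots> = (\<integral>z. psi x z * h z - psi x' z * h z \<partial>\<mu>)"
      by (rule Bochner_Integration.integral_diff[symmetric]) (rule i1)+
    also have "\<dots> = (\<integral>z. (psi x z - psi x' z) * h z \<partial>\<mu>)"
      by (simp add: left_diff_distrib)
    finally show ?thesis .
  qed
  define B where "B = (pL * dist x x' / (r x * W x)) * ((pL * dist y y' / (r y * W y)) / mL)"
  have bnd: "\<bar>(psi x z - psi x' z) * h z\<bar> \<le> B" for z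
  proof -
    have "\<bar>(psi x z - psi x' z) * h z\<bar> = \<bar>psi x z - psi x' z\<bar> * \<bar>h z\<bar>" by (simp add: abs_mult)
    also have "\<dots> \<le> B" unfolding B_def h_def
      using dpsi_bound[OF dx, of z] h_diff_bound[OF dy, of z] by (intro mult_mono) auto
    finally show ?thesis .
  qed
  have "\<bar>\<integral>z. (psi x z - psi x' z) * h z \<partial>\<mu>\<bar> \<le> B * mb x (R1 * r x)"
  proof (rule int_ball_bound(2))
    show "(\<lambda>z. (psi x z - psi x' z) * h z) \<in> borel_measurable \<mu>" using hm by measurable
    show "\<bar>(psi x z - psi x' z) * h z\<bar> \<le> B" for z by (rule bnd)
    show "z \<in> ball x (R1 * r x)" if "(psi x z - psi x' z) * h z \<noteq> 0" for z
      using dpsi_supp[OF dx, of z] that by auto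
  qed
  also have "B * mb x (R1 * r x) \<le> B * (cd R1 * W x)"
    by (intro mult_left_mono) (auto simp: B_def W_def intro: cd(2))
  also have "B * (cd R1 * W x) = kM * dist x x' * dist y y' / (r x * r y * W y)"
    unfolding B_def kM_def by (simp add: field_simps)
  finally show "\<bar>K x y - K x y' - K x' y + K x' y'\<bar> \<le> kM * dist x x' * dist y y' / (r x * r y * W y)"
    unfolding eq .
next
  assume "K x y - K x y' - K x' y + K x' y' \<noteq> 0"
  then obtain z where "(psi x z - psi x' z) * ((psi y z - psi y' z) / m z) \<noteq> 0"
  proof -
    have hm': "(\<lambda>z. (psi y z - psi y' z) / m z) \<in> borel_measurable \<mu>" by measurable
    have i1: "integrable \<mu> (\<lambda>z. psi x z * ((psi y z - psi y' z) / m z))" "integrable \<mu> (\<lambda>z. psi x' z * ((psi y z - psi y' z) / m z))"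
      using int_psi_h(1)[OF hm' h_diff_bound[OF dy]] by auto
    have "K x y - K x y' - K x' y + K x' y' = (K x y - K x y') - (K x' y - K x' y')" by simp
    also have "\<dots> = (\<integral>z. psi x z * ((psi y z - psi y' z) / m z) - psi x' z * ((psi y z - psi y' z) / m z) \<partial>\<mu>)"
      unfolding K_diff_eq by (rule Bochner_Integration.integral_diff[symmetric]) (rule i1)+
    finally have "(\<integral>z. psi x z * ((psi y z - psi y' z) / m z) - psi x' z * ((psi y z - psi y' z) / m z) \<partial>\<mu>) \<noteq> 0"
      using \<open>K x y - K x y' - K x' y + K x' y' \<noteq> 0\<close> by simp
    then obtain z where "psi x z * ((psi y z - psi y' z) / m z) - psi x' z * ((psi y z - psi y' z) / m z) \<noteq> 0"
      using int_nonzero_ex by blast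
    then have "(psi x z - psi x' z) * ((psi y z - psi y' z) / m z) \<noteq> 0" by (simp add: left_diff_distrib)
    then show ?thesis by (rule that)
  qed
  then have dp1: "psi x z - psi x' z \<noteq> 0" and dp2: "psi y z - psi y' z \<noteq> 0" by auto
  have dxz: "dist x z < R1 * r x" by (rule dpsi_supp[OF dx dp1])
  have dyz: "dist y z < R1 * r y" by (rule dpsi_supp[OF dy dp2])
  have rz: "r z \<le> cr R1 * r y" using dyz by (intro cr(2)) simp
  have rx: "r x \<le> cr R1 * r z" using dxz by (intro cr(3)) simp
  have "r x \<le> cr R1 * (cr R1 * r y)" using rx mult_left_mono[OF rz cr_nn[of R1]] by linarith
  then have "R1 * r x \<le> R1 * (cr R1 * (cr R1 * r y))" by (intro mult_left_mono) auto
  moreover have "dist x y \<le> dist x z + dist y z" using dist_triangle[of x y z] by (simp add: dist_commute)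
  moreover have "R3 * r y = R1 * r y + R1 * (cr R1 * (cr R1 * r y))" unfolding R3_def by (simp add: algebra_simps)
  ultimately show "dist x y < R3 * r y" using dxz dyz by linarith
qed

end

lemma fle: "0 < p \<Longrightarrow> 0 < (q::real) \<Longrightarrow> X * p \<le> Y * q \<Longrightarrow> X / q \<le> Y / p"
  by (simp add: field_simps)

lemma abs_diff_nonneg_le: "0 \<le> (u::real) \<Longrightarrow> 0 \<le> v \<Longrightarrow> \<bar>u - v\<bar> \<le> u + v"
  by linarith

context rdsp begin

definition G :: "'a \<Rightarrow> 'a \<Rightarrow> real \<Rightarrow> real \<Rightarrow> real \<Rightarrow> bool" where
  "G x y T Q B \<longleftrightarrow> \<bar>T\<bar> \<le> Q \<and> (T \<noteq> 0 \<longrightarrow> W y \<le> B * W x)"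

lemma G_zero: "T = 0 \<Longrightarrow> 0 \<le> Q \<Longrightarrow> G x y T Q B"
  unfolding G_def by simp

lemma G_mono: "G x y T Q B \<Longrightarrow> Q \<le> Q' \<Longrightarrow> B \<le> B' \<Longrightarrow> G x y T Q' B'"
proof -
  assume a: "G x y T Q B" "Q \<le> Q'" "B \<le> B'"
  have "B * W x \<le> B' * W x" using a(3) by (intro mult_right_mono) auto
  have h: "\<bar>T\<bar> \<le> Q" "T \<noteq> 0 \<longrightarrow> W y \<le> B * W x" using a(1) unfolding G_def by auto
  show "G x y T Q' B'" unfolding G_def
  proof (intro conjI impI)
    show "\<bar>T\<bar> \<le> Q'" using h(1) a(2) by linarith
    assume "T \<noteq> 0" then have "W y \<le> B * W x" using h(2) by blast
    then show "W y \<le> B' * W x" using \<open>B * W x \<le> B' * W x\<close> by linarith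
  qed
qed

lemma G_diff: "G x y T1 Q1 B1 \<Longrightarrow> G x y T2 Q2 B2 \<Longrightarrow> G x y (T1 - T2) (Q1 + Q2) (max B1 B2)"
  unfolding G_def
proof (intro conjI impI)
  assume a: "\<bar>T1\<bar> \<le> Q1 \<and> (T1 \<noteq> 0 \<longrightarrow> W y \<le> B1 * W x)" "\<bar>T2\<bar> \<le> Q2 \<and> (T2 \<noteq> 0 \<longrightarrow> W y \<le> B2 * W x)"
  show "\<bar>T1 - T2\<bar> \<le> Q1 + Q2" using a by linarith
  assume "T1 - T2 \<noteq> 0"
  then have "T1 \<noteq> 0 \<or> T2 \<noteq> 0" by auto
  moreover have "B1 * W x \<le> max B1 B2 * W x" "B2 * W x \<le> max B1 B2 * W x"
    by (intro mult_right_mono; simp)+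
  ultimately show "W y \<le> max B1 B2 * W x"
  proof (elim disjE)
    assume "T1 \<noteq> 0" then have "W y \<le> B1 * W x" using a by blast
    then show ?thesis using \<open>B1 * W x \<le> max B1 B2 * W x\<close> by linarith
  next
    assume "T2 \<noteq> 0" then have "W y \<le> B2 * W x" using a by blast
    then show ?thesis using \<open>B2 * W x \<le> max B1 B2 * W x\<close> by linarith
  qed
qed

lemma G_diff': "G x y T1 Q1 B1 \<Longrightarrow> G x y T2 Q2 B2 \<Longrightarrow> T = T1 - T2 \<Longrightarrow> Q1 + Q2 \<le> Q \<Longrightarrow> max B1 B2 \<le> B \<Longrightarrow> G x y T Q B"
  using G_diff G_mono by blast

lemma iii_A:
  assumes d: "dist y y' \<le> r y"
  shows "G x y (K x y - K x y') (kL * cr R2 * cv R2 * dist y y' / (r x * W x)) (cv R2)"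
proof (cases "K x y - K x y' = 0")
  case True then show ?thesis by (intro G_zero) (auto simp: kL_def)
next
  case False
  have L: "dist y x \<le> R2 * r y" using KL(2)[OF d False] by (simp add: dist_commute)
  have rx: "r x \<le> cr R2 * r y" by (rule cr(2)[OF L])
  have Wx: "W x \<le> cv R2 * W y" by (rule cv(2)[OF L])
  have Wy: "W y \<le> cv R2 * W x" by (rule cv(3)[OF L])
  have "r x * W x \<le> (cr R2 * r y) * (cv R2 * W y)" using rx Wx by (intro mult_mono) auto
  then have "kL * dist y y' * (r x * W x) \<le> kL * dist y y' * ((cr R2 * r y) * (cv R2 * W y))"
    by (intro mult_left_mono) (auto simp: kL_def)
  then have "kL * dist y y' * (r x * W x) \<le> (kL * cr R2 * cv R2 * dist y y') * (r y * W y)"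
    by (simp add: algebra_simps)
  then have "kL * dist y y' / (r y * W y) \<le> (kL * cr R2 * cv R2 * dist y y') / (r x * W x)"
    by (intro fle) auto
  then show ?thesis unfolding G_def using KL(1)[OF d, of x] Wy by simp
qed

lemma K_single:
  assumes "K x v \<noteq> 0 \<Longrightarrow> dist x y \<le> M * r x" and "K x v \<noteq> 0 \<Longrightarrow> r y \<le> D" and D0: "0 \<le> D"
  shows "G x y (K x v) (kB * cr M * D / (r x * W x)) (cv M)"
proof (cases "K x v = 0")
  case True then show ?thesis by (intro G_zero) (use D0 in \<open>auto\<close>)
next
  case False
  have L: "dist x y \<le> M * r x" using assms(1)[OF False] .
  have rx: "r x \<le> cr M * r y" by (rule cr(3)[OF L])
  have Wy: "W y \<le> cv M * W x" by (rule cv(2)[OF L])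
  have D: "r y \<le> D" using assms(2)[OF False] .
  have "r x \<le> cr M * D" using rx mult_left_mono[OF D cr_nn[of M]] by linarith
  then have "kB * r x \<le> kB * (cr M * D)" by (intro mult_left_mono) auto
  then have "kB * (r x * W x) \<le> (kB * cr M * D) * W x" by (simp add: algebra_simps)
  then have "kB / W x \<le> (kB * cr M * D) / (r x * W x)" by (intro fle) auto
  then show ?thesis unfolding G_def using K_upper'[of x v] Wy by simp
qed

definition "M2 = 4 * c1 + C3"

lemma iii_B:
  assumes d: "r y < dist y y'" and c: "dist y y' \<le> (\<rho> x + dist x y) / 2"
  shows "G x y (K x y - K x y') (kB * cr (2 * c1) * dist y y' / (r x * W x) + kB * cr M2 * dist y y' / (r x * W x)) (max (cv (2 * c1)) (cv M2))"
proof (rule G_diff)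
  show "G x y (K x y) (kB * cr (2 * c1) * dist y y' / (r x * W x)) (cv (2 * c1))"
  proof (rule K_single)
    assume "K x y \<noteq> 0"
    then show "dist x y \<le> 2 * c1 * r x" using K_supp by fastforce
  next
    show "r y \<le> dist y y'" using d by simp
  qed simp
  show "G x y (K x y') (kB * cr M2 * dist y y' / (r x * W x)) (cv M2)"
  proof (rule K_single)
    assume "K x y' \<noteq> 0"
    then have "dist x y' < 2 * c1 * r x" using K_supp by blast
    moreover have "dist x y \<le> dist x y' + dist y y'" using dist_triangle[of x y y'] by (simp add: dist_commute)
    moreover have "\<rho> x \<le> C3 * r x" by (rule rho_le_r)
    ultimately show "dist x y \<le> M2 * r x" using c unfolding M2_def by (simp add: algebra_simps)
  next
    show "r y \<le> dist y y'" using d by simp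
  qed simp
qed

definition "A3 = kL * cr R2 * cv R2 + kB * cr (2 * c1) + kB * cr M2"
definition "B3 = max (cv R2) (max (cv (2 * c1)) (cv M2))"

lemma iii_core:
  assumes c: "dist y y' \<le> (\<rho> x + dist x y) / 2"
  shows "G x y (K x y - K x y') (A3 * dist y y' / (r x * W x)) B3"
proof (cases "dist y y' \<le> r y")
  case True
  show ?thesis
  proof (rule G_mono[OF iii_A[OF True]])
    have "kL * cr R2 * cv R2 \<le> A3" unfolding A3_def by (simp add: kL_def)
    then show "kL * cr R2 * cv R2 * dist y y' / (r x * W x) \<le> A3 * dist y y' / (r x * W x)"
      by (intro divide_right_mono mult_right_mono) auto
    show "cv R2 \<le> B3" unfolding B3_def by simp
  qed
next
  case False
  then have d: "r y < dist y y'" by simp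
  show ?thesis
  proof (rule G_mono[OF iii_B[OF d c]])
    have "kB * cr (2 * c1) * dist y y' / (r x * W x) + kB * cr M2 * dist y y' / (r x * W x)
        = (kB * cr (2 * c1) + kB * cr M2) * dist y y' / (r x * W x)" by (simp add: field_simps)
    also have "\<dots> \<le> A3 * dist y y' / (r x * W x)"
      unfolding A3_def by (intro divide_right_mono mult_right_mono) (auto simp: kL_def)
    finally show "kB * cr (2 * c1) * dist y y' / (r x * W x) + kB * cr M2 * dist y y' / (r x * W x)
        \<le> A3 * dist y y' / (r x * W x)" .
    show "max (cv (2 * c1)) (cv M2) \<le> B3" unfolding B3_def by auto
  qed
qed

end

context rdsp begin

definition "cE Q = 2 + C3 + 3 * Q * C3 * (1 + C3)"

lemma far:
  assumes c1': "dist x x' \<le> (\<rho> y + dist x y) / 3" and c2': "dist y y' \<le> (\<rho> x + dist x y) / 3"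
    and f: "dist x' y' \<le> Q * \<rho> x'" and Q: "0 \<le> Q"
  shows "dist x y \<le> cE Q powr (1/ea) * \<rho> x"
proof -
  have c1'': "3 * dist x x' \<le> \<rho> y + dist x y" using c1' by simp
  have c2'': "3 * dist y y' \<le> \<rho> x + dist x y" using c2' by simp
  define P where "P = \<rho> x"
  define L where "L = dist x y"
  define E where "E = P powr ea * (P + L) powr (1 - ea)"
  have P: "0 < P" unfolding P_def by simp
  have L: "0 \<le> L" unfolding L_def by simp
  have C3: "1 \<le> C3" by (rule C3_ge1)
  have E0: "0 \<le> E" unfolding E_def by simp
  have PE: "P \<le> E"
  proof -
    have "P = P powr ea * P powr (1 - ea)" using P by (simp add: powr_add[symmetric])
    also have "\<dots> \<le> P powr ea * (P + L) powr (1 - ea)"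
      using P L ea by (intro mult_left_mono powr_mono2) auto
    finally show ?thesis unfolding E_def .
  qed
  have ry: "\<rho> y \<le> C3 * E"
    using adm_ineq[of y x] unfolding E_def P_def L_def by (simp add: mult.assoc)
  have ryw: "\<rho> y \<le> C3 * (P + L)" using weak_adm[of y x] unfolding P_def L_def .
  have LC: "L \<le> C3 * (P + L)" using ge1_mult[OF C3, of "P + L"] P L by linarith
  have d1: "dist x x' \<le> C3 * (P + L)" using c1'' ryw LC mult_nonneg_nonneg[of C3 "P + L"] C3 P L unfolding L_def by linarith
  have Pd: "P + dist x x' \<le> (1 + C3) * (P + L)" using d1 L by (simp add: algebra_simps)
  have pw: "(1 + C3) powr (1 - ea) \<le> 1 + C3"
    using powr_mono[of "1 - ea" 1 "1 + C3"] ea C3 by simp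
  have "(P + dist x x') powr (1 - ea) \<le> ((1 + C3) * (P + L)) powr (1 - ea)"
    using Pd P ea by (intro powr_mono2) auto
  also have "\<dots> = (1 + C3) powr (1 - ea) * (P + L) powr (1 - ea)"
    using C3 P L by (simp add: powr_mult)
  also have "\<dots> \<le> (1 + C3) * (P + L) powr (1 - ea)"
    using pw by (intro mult_right_mono) auto
  finally have pd: "(P + dist x x') powr (1 - ea) \<le> (1 + C3) * (P + L) powr (1 - ea)" .
  have "\<rho> x' \<le> C3 * P powr ea * (P + dist x x') powr (1 - ea)"
    using adm_ineq[of x' x] unfolding P_def .
  also have "\<dots> \<le> C3 * P powr ea * ((1 + C3) * (P + L) powr (1 - ea))"
    using pd C3 by (intro mult_left_mono) auto
  also have "\<dots> = C3 * (1 + C3) * E" unfolding E_def by (simp add: algebra_simps)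
  finally have rx': "\<rho> x' \<le> C3 * (1 + C3) * E" .
  have tri: "dist x y \<le> dist x x' + dist x' y' + dist y y'"
    using dist_triangle[of x y x'] dist_triangle[of x' y y'] by (simp add: dist_commute)
  have "Q * \<rho> x' \<le> Q * (C3 * (1 + C3) * E)" using rx' Q by (intro mult_left_mono) auto
  then have "L \<le> \<rho> y + 3 * (Q * (C3 * (1 + C3) * E)) + P"
    using tri c1'' c2'' f unfolding L_def P_def by linarith
  then have "P + L \<le> 2 * E + C3 * E + 3 * (Q * (C3 * (1 + C3) * E))" using ry PE by linarith
  also have "\<dots> = cE Q * E" unfolding cE_def by (simp add: algebra_simps)
  finally have "P + L \<le> cE Q * P powr ea * (P + L) powr (1 - ea)" unfolding E_def by (simp add: mult.assoc)
  moreover have "0 < cE Q" unfolding cE_def using C3 Q by (intro add_pos_nonneg) auto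
  ultimately have "P + L \<le> cE Q powr (1/ea) * P" using P L by (intro sublin) auto
  then show ?thesis unfolding P_def L_def using rho_pos[of x] by linarith
qed

end

context rdsp begin

definition "M4 = C3 + 2 * R2"
definition "M5 = C3 + 3 * c1"
definition "M6 = cE (2 * c1) powr (1/ea) * C3"
definition "M7 = 2 * M6 + C3"

lemma C3_nn[simp]: "0 \<le> C3" using C3_ge1 by linarith
lemma R2_nn[simp]: "0 \<le> R2" unfolding R2_def by simp
lemma M6_nn[simp]: "0 \<le> M6" unfolding M6_def by simp

lemma iv_1:
  assumes dx: "dist x x' \<le> r x" and dy: "dist y y' \<le> r y"
  shows "G x y ((K x y - K x y') - (K x' y - K x' y'))
           (kM * cr R3 * cv R3 * dist x x' * dist y y' / (r x * r x * W x)) (cv R3)"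
proof (cases "K x y - K x y' - K x' y + K x' y' = 0")
  case True then show ?thesis by (intro G_zero) auto
next
  case False
  have L: "dist y x \<le> R3 * r y" using KM(2)[OF dx dy False] by (simp add: dist_commute)
  have rx: "r x \<le> cr R3 * r y" by (rule cr(2)[OF L])
  have Wx: "W x \<le> cv R3 * W y" by (rule cv(2)[OF L])
  have Wy: "W y \<le> cv R3 * W x" by (rule cv(3)[OF L])
  have "r x * W x \<le> (cr R3 * r y) * (cv R3 * W y)" using rx Wx by (intro mult_mono) auto
  then have "(kM * dist x x' * dist y y' * r x) * (r x * W x)
      \<le> (kM * dist x x' * dist y y' * r x) * ((cr R3 * r y) * (cv R3 * W y))"
    by (intro mult_left_mono) auto
  then have "kM * dist x x' * dist y y' * (r x * r x * W x) \<le> (kM * cr R3 * cv R3 * dist x x' * dist y y') * (r x * r y * W y)"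
    by (simp add: algebra_simps)
  then have "kM * dist x x' * dist y y' / (r x * r y * W y) \<le> (kM * cr R3 * cv R3 * dist x x' * dist y y') / (r x * r x * W x)"
    by (intro fle) auto
  moreover have "(K x y - K x y') - (K x' y - K x' y') = K x y - K x y' - K x' y + K x' y'" by simp
  ultimately show ?thesis unfolding G_def using KM(1)[OF dx dy] Wy by auto
qed

lemma iv_T2a:
  assumes r1: "r x \<le> dist x x'" and dy: "dist y y' \<le> r y" and c1': "3 * dist x x' \<le> \<rho> y + dist x y"
  shows "G x y (K x' y - K x' y') (kL * cr M4 * cv M4 * dist x x' * dist y y' / (r x * r x * W x)) (cv M4)"
proof (cases "K x' y - K x' y' = 0")
  case True then show ?thesis by (intro G_zero) auto
next
  case False
  have d: "dist x' y < R2 * r y" by (rule KL(2)[OF dy False])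
  have tri: "dist x y \<le> dist x x' + dist x' y" by (rule dist_triangle)
  have "\<rho> y \<le> C3 * r y" by (rule rho_le_r)
  then have "2 * dist x y \<le> C3 * r y + 3 * (R2 * r y)" using d tri c1' by linarith
  moreover have "C3 * r y + 3 * (R2 * r y) \<le> 2 * (M4 * r y)"
    unfolding M4_def using R2_nn C3_nn by (simp add: algebra_simps mult_nonneg_nonneg)
  ultimately have L: "dist y x \<le> M4 * r y" by (simp add: dist_commute)
  have rx: "r x \<le> cr M4 * r y" by (rule cr(2)[OF L])
  have Wx: "W x \<le> cv M4 * W y" by (rule cv(2)[OF L])
  have Wy: "W y \<le> cv M4 * W x" by (rule cv(3)[OF L])
  have "r x * W x \<le> (cr M4 * r y) * (cv M4 * W y)" using rx Wx by (intro mult_mono) auto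
  then have "r x * (r x * W x) \<le> dist x x' * ((cr M4 * r y) * (cv M4 * W y))"
    by (rule mult_mono[OF r1]) auto
  then have "(kL * dist y y') * (r x * (r x * W x)) \<le> (kL * dist y y') * (dist x x' * ((cr M4 * r y) * (cv M4 * W y)))"
    by (intro mult_left_mono) auto
  then have "kL * dist y y' * (r x * r x * W x) \<le> (kL * cr M4 * cv M4 * dist x x' * dist y y') * (r y * W y)"
    by (simp add: algebra_simps)
  then have "kL * dist y y' / (r y * W y) \<le> (kL * cr M4 * cv M4 * dist x x' * dist y y') / (r x * r x * W x)"
    by (intro fle) auto
  then show ?thesis unfolding G_def using KL(1)[OF dy, of x'] Wy by auto
qed

lemma iv_T2b1:
  assumes r1: "r x \<le> dist x x'" and r2: "r y \<le> dist y y'" and c1': "3 * dist x x' \<le> \<rho> y + dist x y"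
  shows "G x y (K x' y) (kB * cr M5 * cv M5 * dist x x' * dist y y' / (r x * r x * W x)) (cv M5)"
proof (cases "K x' y = 0")
  case True then show ?thesis by (intro G_zero) auto
next
  case False
  have d: "dist x' y < 2 * c1 * r y" using K_supp[OF False] by blast
  have tri: "dist x y \<le> dist x x' + dist x' y" by (rule dist_triangle)
  have "\<rho> y \<le> C3 * r y" by (rule rho_le_r)
  then have "2 * dist x y \<le> C3 * r y + 3 * (2 * c1 * r y)" using d tri c1' by linarith
  moreover have "C3 * r y + 3 * (2 * c1 * r y) \<le> 2 * (M5 * r y)"
    unfolding M5_def by (simp add: algebra_simps mult_nonneg_nonneg)
  ultimately have L: "dist y x \<le> M5 * r y" by (simp add: dist_commute)
  have rx: "r x \<le> cr M5 * r y" by (rule cr(2)[OF L])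
  have Wx: "W x \<le> cv M5 * W y" by (rule cv(2)[OF L])
  have Wy: "W y \<le> cv M5 * W x" by (rule cv(3)[OF L])
  have "r x \<le> cr M5 * dist y y'" using rx mult_left_mono[OF r2 cr_nn[of M5]] by linarith
  then have "r x * W x \<le> (cr M5 * dist y y') * (cv M5 * W y)" using Wx by (intro mult_mono) auto
  then have "r x * (r x * W x) \<le> dist x x' * ((cr M5 * dist y y') * (cv M5 * W y))"
    by (rule mult_mono[OF r1]) auto
  then have "kB * (r x * (r x * W x)) \<le> kB * (dist x x' * ((cr M5 * dist y y') * (cv M5 * W y)))"
    by (intro mult_left_mono) auto
  then have "kB * (r x * r x * W x) \<le> (kB * cr M5 * cv M5 * dist x x' * dist y y') * W y"
    by (simp add: algebra_simps)
  then have "kB / W y \<le> (kB * cr M5 * cv M5 * dist x x' * dist y y') / (r x * r x * W x)"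
    by (intro fle) auto
  then show ?thesis unfolding G_def using K_upper[of x' y] Wy by auto
qed

lemma iv_T2b2:
  assumes r1: "r x \<le> dist x x'" and r2: "r y \<le> dist y y'"
    and c1': "dist x x' \<le> (\<rho> y + dist x y) / 3" and c2': "dist y y' \<le> (\<rho> x + dist x y) / 3"
  shows "G x y (K x' y') (kB * cv M7 * cr M6 * dist x x' * dist y y' / (r x * r x * W x)) (cv M6)"
proof (cases "K x' y' = 0")
  case True then show ?thesis by (intro G_zero) auto
next
  case False
  have "dist x' y' < 2 * c1 * r x'" using K_supp[OF False] by blast
  moreover have "2 * c1 * r x' \<le> 2 * c1 * \<rho> x'" using r_le_rho[of x'] by (intro mult_left_mono) auto
  ultimately have f: "dist x' y' \<le> (2 * c1) * \<rho> x'" by linarith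
  have "dist x y \<le> cE (2 * c1) powr (1/ea) * \<rho> x" by (rule far[OF c1' c2' f]) simp
  also have "\<dots> \<le> cE (2 * c1) powr (1/ea) * (C3 * r x)" using rho_le_r[of x] by (intro mult_left_mono) auto
  finally have L: "dist x y \<le> M6 * r x" unfolding M6_def by (simp add: mult.assoc)
  have c2'': "3 * dist y y' \<le> \<rho> x + dist x y" using c2' by simp
  have tri: "dist x y' \<le> dist x y + dist y y'" by (rule dist_triangle)
  have "\<rho> x \<le> C3 * r x" by (rule rho_le_r)
  then have "3 * dist x y' \<le> 4 * (M6 * r x) + C3 * r x" using L tri c2'' by linarith
  moreover have "4 * (M6 * r x) + C3 * r x \<le> 3 * (M7 * r x)"
    unfolding M7_def by (simp add: algebra_simps mult_nonneg_nonneg)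
  ultimately have L7: "dist x y' \<le> M7 * r x" by simp
  have Wx: "W x \<le> cv M7 * W y'" by (rule cv(3)[OF L7])
  have Wy: "W y \<le> cv M6 * W x" by (rule cv(2)[OF L])
  have rx: "r x \<le> cr M6 * r y" by (rule cr(3)[OF L])
  have "r x \<le> cr M6 * dist y y'" using rx mult_left_mono[OF r2 cr_nn[of M6]] by linarith
  then have "r x * W x \<le> (cr M6 * dist y y') * (cv M7 * W y')" using Wx by (intro mult_mono) auto
  then have "r x * (r x * W x) \<le> dist x x' * ((cr M6 * dist y y') * (cv M7 * W y'))"
    by (rule mult_mono[OF r1]) auto
  then have "kB * (r x * (r x * W x)) \<le> kB * (dist x x' * ((cr M6 * dist y y') * (cv M7 * W y')))"
    by (intro mult_left_mono) auto
  then have "kB * (r x * r x * W x) \<le> (kB * cv M7 * cr M6 * dist x x' * dist y y') * W y'"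
    by (simp add: algebra_simps)
  then have "kB / W y' \<le> (kB * cv M7 * cr M6 * dist x x' * dist y y') / (r x * r x * W x)"
    by (intro fle) auto
  then show ?thesis unfolding G_def using K_upper[of x' y'] Wy by auto
qed

lemma iv_T3:
  assumes dx: "dist x x' \<le> r x" and r2: "r y \<le> dist y y'"
  shows "G x y (K x y - K x' y) (kL * cr R2 * dist x x' * dist y y' / (r x * r x * W x)) (cv R2)"
proof (cases "K x y - K x' y = 0")
  case True then show ?thesis by (intro G_zero) auto
next
  case False
  have eq: "K x y - K x' y = K y x - K y x'" using K_sym by simp
  have "dist y x < R2 * r x" using KL(2)[OF dx, of y] False eq by simp
  then have L: "dist x y \<le> R2 * r x" by (simp add: dist_commute)
  have Wy: "W y \<le> cv R2 * W x" by (rule cv(2)[OF L])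
  have rx: "r x \<le> cr R2 * r y" by (rule cr(3)[OF L])
  have "r x \<le> cr R2 * dist y y'" using rx mult_left_mono[OF r2 cr_nn[of R2]] by linarith
  then have "(kL * dist x x' * (r x * W x)) * r x \<le> (kL * dist x x' * (r x * W x)) * (cr R2 * dist y y')"
    by (intro mult_left_mono) auto
  then have "kL * dist x x' * (r x * r x * W x) \<le> (kL * cr R2 * dist x x' * dist y y') * (r x * W x)"
    by (simp add: algebra_simps)
  then have "kL * dist x x' / (r x * W x) \<le> (kL * cr R2 * dist x x' * dist y y') / (r x * r x * W x)"
    by (intro fle) auto
  then show ?thesis unfolding G_def using KL(1)[OF dx, of y] Wy eq by auto
qed

lemma iv_T4:
  assumes dx: "dist x x' \<le> r x" and r2: "r y \<le> dist y y'" and c2': "3 * dist y y' \<le> \<rho> x + dist x y"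
  shows "G x y (K x y' - K x' y') (kL * cr M4 * dist x x' * dist y y' / (r x * r x * W x)) (cv M4)"
proof (cases "K x y' - K x' y' = 0")
  case True then show ?thesis by (intro G_zero) auto
next
  case False
  have eq: "K x y' - K x' y' = K y' x - K y' x'" using K_sym by simp
  have d: "dist y' x < R2 * r x" using KL(2)[OF dx, of y'] False eq by simp
  have tri: "dist x y \<le> dist x y' + dist y y'" using dist_triangle[of x y y'] by (simp add: dist_commute)
  have "\<rho> x \<le> C3 * r x" by (rule rho_le_r)
  moreover have d': "dist x y' < R2 * r x" using d by (simp add: dist_commute)
  ultimately have "2 * dist x y \<le> 3 * (R2 * r x) + C3 * r x" using tri c2' by linarith
  moreover have "3 * (R2 * r x) + C3 * r x \<le> 2 * (M4 * r x)"
    unfolding M4_def by (simp add: algebra_simps mult_nonneg_nonneg)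
  ultimately have L: "dist x y \<le> M4 * r x" by simp
  have Wy: "W y \<le> cv M4 * W x" by (rule cv(2)[OF L])
  have rx: "r x \<le> cr M4 * r y" by (rule cr(3)[OF L])
  have "r x \<le> cr M4 * dist y y'" using rx mult_left_mono[OF r2 cr_nn[of M4]] by linarith
  then have "(kL * dist x x' * (r x * W x)) * r x \<le> (kL * dist x x' * (r x * W x)) * (cr M4 * dist y y')"
    by (intro mult_left_mono) auto
  then have "kL * dist x x' * (r x * r x * W x) \<le> (kL * cr M4 * dist x x' * dist y y') * (r x * W x)"
    by (simp add: algebra_simps)
  then have "kL * dist x x' / (r x * W x) \<le> (kL * cr M4 * dist x x' * dist y y') / (r x * r x * W x)"
    by (intro fle) auto
  then show ?thesis unfolding G_def using KL(1)[OF dx, of y'] Wy eq by auto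
qed

end

context rdsp begin

definition "A4 = kM * cr R3 * cv R3 + A3 + kL * cr M4 * cv M4 + kB * cr M5 * cv M5 + kB * cv M7 * cr M6
   + kL * cr R2 + kL * cr M4"
definition "B4 = max (cv R3) (max B3 (max (cv M4) (max (cv M5) (max (cv M6) (cv R2)))))"

lemma A3_nn[simp]: "0 \<le> A3" unfolding A3_def by simp

lemma Q_eq: "c * d1 * d2 / (r x * r x * W x) = c * (d1 * d2 / (r x * r x * W x))"
  by simp

lemma iv_core:
  assumes c1: "dist x x' \<le> (\<rho> y + dist x y) / 3" and c2: "dist y y' \<le> (\<rho> x + dist x y) / 3"
  shows "G x y ((K x y - K x y') - (K x' y - K x' y')) (A4 * dist x x' * dist y y' / (r x * r x * W x)) B4"
proof -
  define X where "X = dist x x' * dist y y' / (r x * r x * W x)"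
  have X: "0 \<le> X" unfolding X_def by simp
  have c1'': "3 * dist x x' \<le> \<rho> y + dist x y" using c1 by simp
  have c2'': "3 * dist y y' \<le> \<rho> x + dist x y" using c2 by simp
  have Aeq: "A4 * dist x x' * dist y y' / (r x * r x * W x) = A4 * X" unfolding X_def by simp
  let ?T = "(K x y - K x y') - (K x' y - K x' y')"
  show ?thesis unfolding Aeq
  proof (cases "dist x x' \<le> r x")
    case dx: True
    show "G x y ?T (A4 * X) B4"
    proof (cases "dist y y' \<le> r y")
      case dy: True
      show ?thesis
      proof (rule G_mono[OF iv_1[OF dx dy]])
        have "kM * cr R3 * cv R3 \<le> A4" unfolding A4_def by simp
        then have "kM * cr R3 * cv R3 * X \<le> A4 * X" using X by (rule mult_right_mono)
        then show "kM * cr R3 * cv R3 * dist x x' * dist y y' / (r x * r x * W x) \<le> A4 * X"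
          unfolding X_def by simp
        show "cv R3 \<le> B4" unfolding B4_def by simp
      qed
    next
      case False
      then have r2: "r y \<le> dist y y'" by simp
      show ?thesis
      proof (rule G_diff'[OF iv_T3[OF dx r2] iv_T4[OF dx r2 c2'']])
        show "?T = (K x y - K x' y) - (K x y' - K x' y')" by simp
        have "kL * cr R2 * X + kL * cr M4 * X = (kL * cr R2 + kL * cr M4) * X" by (simp add: algebra_simps)
        also have "\<dots> \<le> A4 * X" unfolding A4_def using X by (intro mult_right_mono) auto
        finally show "kL * cr R2 * dist x x' * dist y y' / (r x * r x * W x) +
            kL * cr M4 * dist x x' * dist y y' / (r x * r x * W x) \<le> A4 * X"
          unfolding X_def by simp
        show "max (cv R2) (cv M4) \<le> B4" unfolding B4_def by auto
      qed
    qed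
  next
    case False
    then have r1: "r x \<le> dist x x'" by simp
    have "2 * dist y y' \<le> \<rho> x + dist x y" using c2'' zero_le_dist[of y y'] by linarith
    then have c2h: "dist y y' \<le> (\<rho> x + dist x y) / 2" by simp
    have T1: "G x y (K x y - K x y') (A3 * X) B3"
    proof (rule G_mono[OF iii_core[OF c2h]])
      have "A3 * dist y y' * (r x * r x * W x) \<le> A3 * dist y y' * (dist x x' * (r x * W x))"
        using r1 by (intro mult_left_mono mult_right_mono) auto
      then have "A3 * dist y y' * (r x * r x * W x) \<le> (A3 * dist x x' * dist y y') * (r x * W x)"
        by (simp add: algebra_simps)
      then have "A3 * dist y y' / (r x * W x) \<le> (A3 * dist x x' * dist y y') / (r x * r x * W x)"
        by (intro fle) auto
      then show "A3 * dist y y' / (r x * W x) \<le> A3 * X" unfolding X_def by simp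
    qed simp
    show "G x y ?T (A4 * X) B4"
    proof (cases "dist y y' \<le> r y")
      case dy: True
      show ?thesis
      proof (rule G_diff'[OF T1 iv_T2a[OF r1 dy c1'']])
        show "?T = (K x y - K x y') - (K x' y - K x' y')" by simp
        have "A3 * X + kL * cr M4 * cv M4 * X = (A3 + kL * cr M4 * cv M4) * X" by (simp add: algebra_simps)
        also have "\<dots> \<le> A4 * X" unfolding A4_def using X by (intro mult_right_mono) auto
        finally show "A3 * X + kL * cr M4 * cv M4 * dist x x' * dist y y' / (r x * r x * W x) \<le> A4 * X"
          unfolding X_def by simp
        show "max B3 (cv M4) \<le> B4" unfolding B4_def by auto
      qed
    next
      case False
      then have r2: "r y \<le> dist y y'" by simp
      have T2: "G x y (K x' y - K x' y') (kB * cr M5 * cv M5 * X + kB * cv M7 * cr M6 * X) (max (cv M5) (cv M6))"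
        using G_diff[OF iv_T2b1[OF r1 r2 c1''] iv_T2b2[OF r1 r2 c1 c2]] unfolding X_def by (simp add: mult.assoc)
      show ?thesis
      proof (rule G_diff'[OF T1 T2])
        show "?T = (K x y - K x y') - (K x' y - K x' y')" by simp
        have "A3 * X + (kB * cr M5 * cv M5 * X + kB * cv M7 * cr M6 * X)
            = (A3 + kB * cr M5 * cv M5 + kB * cv M7 * cr M6) * X" by (simp add: algebra_simps)
        also have "\<dots> \<le> A4 * X" unfolding A4_def using X by (intro mult_right_mono) auto
        finally show "A3 * X + (kB * cr M5 * cv M5 * X + kB * cv M7 * cr M6 * X) \<le> A4 * X" .
        show "max B3 (max (cv M5) (cv M6)) \<le> B4" unfolding B4_def by auto
      qed
    qed
  qed
qed

end

context rdsp begin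

definition "cVW = (SOME c. c \<ge> 1 \<and> (\<forall>x. W x \<le> V \<mu> (\<rho> x) x \<and> V \<mu> (\<rho> x) x \<le> c * W x))"

lemma cVW: "cVW \<ge> 1" "W x \<le> V \<mu> (\<rho> x) x" "V \<mu> (\<rho> x) x \<le> cVW * W x"
  using someI_ex[OF V_W] unfolding cVW_def[symmetric] by auto

lemma V_pos: "0 < V \<mu> (\<rho> x) x" using cVW(2)[of x] W_pos[of x] by linarith

lemma Vsum: "W y \<le> B * W x \<Longrightarrow> V \<mu> (\<rho> x) x + V \<mu> (\<rho> y) y \<le> cVW * (1 + B) * W x"
proof -
  assume h: "W y \<le> B * W x"
  have "cVW * W y \<le> cVW * (B * W x)" using h cVW(1) by (intro mult_left_mono) auto
  then show ?thesis using cVW(3)[of x] cVW(3)[of y] by (simp add: algebra_simps)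
qed

lemma conv1:
  assumes g: "G x y T (A * D / (r x * W x)) B" and A: "0 \<le> A" and B: "0 \<le> B" and D: "0 \<le> D"
  shows "\<bar>T\<bar> \<le> (A * C3 * cVW * (1 + B)) * (D / \<rho> x) * (1 / (V \<mu> (\<rho> x) x + V \<mu> (\<rho> y) y))"
proof (cases "T = 0")
  case True
  have "0 \<le> (A * C3 * cVW * (1 + B)) * (D / \<rho> x) * (1 / (V \<mu> (\<rho> x) x + V \<mu> (\<rho> y) y))"
    using A B D cVW(1) V_pos[of x] V_pos[of y] by (intro mult_nonneg_nonneg divide_nonneg_nonneg add_nonneg_nonneg) (auto intro: less_imp_le)
  then show ?thesis using True by simp
next
  case False
  have Wy: "W y \<le> B * W x" and T: "\<bar>T\<bar> \<le> A * D / (r x * W x)" using g False unfolding G_def by auto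
  have vs: "V \<mu> (\<rho> x) x + V \<mu> (\<rho> y) y \<le> cVW * (1 + B) * W x" by (rule Vsum[OF Wy])
  have "\<rho> x * (V \<mu> (\<rho> x) x + V \<mu> (\<rho> y) y) \<le> (C3 * r x) * (cVW * (1 + B) * W x)"
    using rho_le_r[of x] vs V_pos[of x] V_pos[of y] by (intro mult_mono) auto
  then have "(A * D) * (\<rho> x * (V \<mu> (\<rho> x) x + V \<mu> (\<rho> y) y)) \<le> (A * D) * ((C3 * r x) * (cVW * (1 + B) * W x))"
    using A D by (intro mult_left_mono) auto
  then have "A * D * (\<rho> x * (V \<mu> (\<rho> x) x + V \<mu> (\<rho> y) y)) \<le> (A * C3 * cVW * (1 + B) * D) * (r x * W x)"
    by (simp add: algebra_simps)
  then have "A * D / (r x * W x) \<le> (A * C3 * cVW * (1 + B) * D) / (\<rho> x * (V \<mu> (\<rho> x) x + V \<mu> (\<rho> y) y))"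
    using V_pos[of x] V_pos[of y] by (intro fle) auto
  then show ?thesis using T by simp
qed

lemma conv2:
  assumes g: "G x y T (A * D1 * D2 / (r x * r x * W x)) B" and A: "0 \<le> A" and B: "0 \<le> B" and D: "0 \<le> D1" "0 \<le> D2"
  shows "\<bar>T\<bar> \<le> (A * C3 * C3 * cVW * (1 + B)) * (D1 / \<rho> x) * (D2 / \<rho> x) * (1 / (V \<mu> (\<rho> x) x + V \<mu> (\<rho> y) y))"
proof (cases "T = 0")
  case True
  have "0 \<le> (A * C3 * C3 * cVW * (1 + B)) * (D1 / \<rho> x) * (D2 / \<rho> x) * (1 / (V \<mu> (\<rho> x) x + V \<mu> (\<rho> y) y))"
    using A B D cVW(1) V_pos[of x] V_pos[of y] by (intro mult_nonneg_nonneg divide_nonneg_nonneg add_nonneg_nonneg) (auto intro: less_imp_le)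
  then show ?thesis using True by simp
next
  case False
  have Wy: "W y \<le> B * W x" and T: "\<bar>T\<bar> \<le> A * D1 * D2 / (r x * r x * W x)" using g False unfolding G_def by auto
  have vs: "V \<mu> (\<rho> x) x + V \<mu> (\<rho> y) y \<le> cVW * (1 + B) * W x" by (rule Vsum[OF Wy])
  have rr: "\<rho> x * \<rho> x \<le> (C3 * r x) * (C3 * r x)"
    using rho_le_r[of x] by (intro mult_mono) auto
  have "(\<rho> x * \<rho> x) * (V \<mu> (\<rho> x) x + V \<mu> (\<rho> y) y) \<le> ((C3 * r x) * (C3 * r x)) * (cVW * (1 + B) * W x)"
    using V_pos[of x] V_pos[of y] by (intro mult_mono[OF rr vs]) (auto intro: less_imp_le)
  then have "(A * D1 * D2) * ((\<rho> x * \<rho> x) * (V \<mu> (\<rho> x) x + V \<mu> (\<rho> y) y)) \<le> (A * D1 * D2) * (((C3 * r x) * (C3 * r x)) * (cVW * (1 + B) * W x))"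
    using A D by (intro mult_left_mono) auto
  then have "A * D1 * D2 * (\<rho> x * \<rho> x * (V \<mu> (\<rho> x) x + V \<mu> (\<rho> y) y)) \<le> (A * C3 * C3 * cVW * (1 + B) * D1 * D2) * (r x * r x * W x)"
    by (simp add: algebra_simps)
  then have "A * D1 * D2 / (r x * r x * W x) \<le> (A * C3 * C3 * cVW * (1 + B) * D1 * D2) / (\<rho> x * \<rho> x * (V \<mu> (\<rho> x) x + V \<mu> (\<rho> y) y))"
    using V_pos[of x] V_pos[of y] by (intro fle) auto
  then show ?thesis using T by simp
qed

lemma B3_nn[simp]: "0 \<le> B3" unfolding B3_def by (simp add: le_max_iff_disj)
lemma B4_nn[simp]: "0 \<le> B4" unfolding B4_def by (simp add: le_max_iff_disj)
lemma A4_nn[simp]: "0 \<le> A4" unfolding A4_def by simp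

definition "Ciii = A3 * C3 * cVW * (1 + B3)"
definition "Civ = A4 * C3 * C3 * cVW * (1 + B4)"
definition "Cb = 2 * kB * cVW"

lemma final_iii: "dist y y' \<le> (\<rho> x + dist x y) / 2 \<Longrightarrow>
   \<bar>K x y - K x y'\<bar> \<le> Ciii * (dist y y' / \<rho> x) * (1 / (V \<mu> (\<rho> x) x + V \<mu> (\<rho> y) y))"
  unfolding Ciii_def by (rule conv1[OF iii_core]) auto

lemma final_iv: "dist x x' \<le> (\<rho> y + dist x y) / 3 \<Longrightarrow> dist y y' \<le> (\<rho> x + dist x y) / 3 \<Longrightarrow>
   \<bar>(K x y - K x y') - (K x' y - K x' y')\<bar> \<le> Civ * (dist x x' / \<rho> x) * (dist y y' / \<rho> x) * (1 / (V \<mu> (\<rho> x) x + V \<mu> (\<rho> y) y))"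
  unfolding Civ_def by (rule conv2[OF iv_core]) auto

lemma final_bound: "K x y \<le> Cb * (1 / (V \<mu> (\<rho> x) x + V \<mu> (\<rho> y) y))"
proof -
  have "K x y * W x \<le> kB" using K_upper'[of x y] by (simp add: field_simps)
  moreover have "K x y * W y \<le> kB" using K_upper[of x y] by (simp add: field_simps)
  ultimately have a: "K x y * (W x + W y) \<le> 2 * kB" by (simp add: algebra_simps)
  have "V \<mu> (\<rho> x) x + V \<mu> (\<rho> y) y \<le> cVW * (W x + W y)" using cVW(3)[of x] cVW(3)[of y] by (simp add: algebra_simps)
  then have "K x y * (V \<mu> (\<rho> x) x + V \<mu> (\<rho> y) y) \<le> K x y * (cVW * (W x + W y))" by (intro mult_left_mono) auto
  also have "\<dots> = cVW * (K x y * (W x + W y))" by simp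
  also have "\<dots> \<le> cVW * (2 * kB)" using a cVW(1) by (intro mult_left_mono) auto
  finally have "K x y * (V \<mu> (\<rho> x) x + V \<mu> (\<rho> y) y) \<le> Cb" unfolding Cb_def by (simp add: mult.commute mult.left_commute)
  then show ?thesis using V_pos[of x] V_pos[of y] by (simp add: field_simps)
qed

lemma final_supp: "dist x y > 2 * c1 * min (\<rho> x) (\<rho> y) \<Longrightarrow> K x y = 0"
proof (rule ccontr)
  assume h: "dist x y > 2 * c1 * min (\<rho> x) (\<rho> y)" and nz: "K x y \<noteq> 0"
  from K_supp[OF nz] have "dist x y < 2 * c1 * r x" "dist x y < 2 * c1 * r y" by auto
  moreover have "2 * c1 * r x \<le> 2 * c1 * \<rho> x" "2 * c1 * r y \<le> 2 * c1 * \<rho> y"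
    using r_le_rho by (intro mult_left_mono; simp)+
  moreover have "2 * c1 * min (\<rho> x) (\<rho> y) = min (2 * c1 * \<rho> x) (2 * c1 * \<rho> y)"
    by (simp add: min_mult_distrib_left)
  ultimately show False using h by linarith
qed

end

theorem proposition3p1:
  fixes \<mu> :: "'a::metric_space measure" and \<rho> :: "'a \<Rightarrow> real"
  assumes "RD_space \<mu>" and "admissible \<rho>"
  shows "\<exists>K :: 'a \<Rightarrow> 'a \<Rightarrow> real. \<exists>C > 0.
    (\<forall>x y. 0 \<le> K x y) \<and>
    (\<forall>x y. dist x y > C * min (\<rho> x) (\<rho> y) \<longrightarrow> K x y = 0) \<and>
    (\<forall>x y. K x y \<le> C * (1 / (V \<mu> (\<rho> x) x + V \<mu> (\<rho> y) y))) \<and>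
    (\<forall>x y. K x y = K y x) \<and>
    (\<forall>x y y'. dist y y' \<le> (\<rho> x + dist x y) / 2 \<longrightarrow>
       \<bar>K x y - K x y'\<bar> \<le> C * (dist y y' / \<rho> x) * (1 / (V \<mu> (\<rho> x) x + V \<mu> (\<rho> y) y))) \<and>
    (\<forall>x x' y y'. dist x x' \<le> (\<rho> y + dist x y) / 3 \<and> dist y y' \<le> (\<rho> x + dist x y) / 3 \<longrightarrow>
       \<bar>(K x y - K x y') - (K x' y - K x' y')\<bar>
         \<le> C * (dist x x' / \<rho> x) * (dist y y' / \<rho> x) * (1 / (V \<mu> (\<rho> x) x + V \<mu> (\<rho> y) y))) \<and>
    (\<forall>y. (\<lambda>x. K x y) \<in> borel_measurable \<mu> \<and> (\<integral>\<^sup>+ x. ennreal (K x y) \<partial>\<mu>) = 1)"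
proof -
  interpret rdsp \<mu> \<rho> by (rule rdsp.intro) (rule assms)+
  define C where "C = max (2 * c1) (max Cb (max Ciii Civ))"
  have C0: "C > 0" unfolding C_def by (simp add: less_max_iff_disj)
  have Cge: "2 * c1 \<le> C" "Cb \<le> C" "Ciii \<le> C" "Civ \<le> C" unfolding C_def by auto
  have P1: "\<forall>x y. 0 \<le> K x y" by simp
  have P2: "\<forall>x y. dist x y > C * min (\<rho> x) (\<rho> y) \<longrightarrow> K x y = 0"
  proof (intro allI impI)
    fix x y assume h: "dist x y > C * min (\<rho> x) (\<rho> y)"
    have "2 * c1 * min (\<rho> x) (\<rho> y) \<le> C * min (\<rho> x) (\<rho> y)"
      using Cge(1) by (intro mult_right_mono) auto
    then show "K x y = 0" using h by (intro final_supp) linarith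
  qed
  have P3: "\<forall>x y. K x y \<le> C * (1 / (V \<mu> (\<rho> x) x + V \<mu> (\<rho> y) y))"
  proof (intro allI)
    fix x y
    have "Cb * (1 / (V \<mu> (\<rho> x) x + V \<mu> (\<rho> y) y)) \<le> C * (1 / (V \<mu> (\<rho> x) x + V \<mu> (\<rho> y) y))"
      using Cge(2) V_pos[of x] V_pos[of y] by (intro mult_right_mono) auto
    then show "K x y \<le> C * (1 / (V \<mu> (\<rho> x) x + V \<mu> (\<rho> y) y))" using final_bound[of x y] by linarith
  qed
  have P4: "\<forall>x y. K x y = K y x" using K_sym by blast
  have P5: "\<forall>x y y'. dist y y' \<le> (\<rho> x + dist x y) / 2 \<longrightarrow>
       \<bar>K x y - K x y'\<bar> \<le> C * (dist y y' / \<rho> x) * (1 / (V \<mu> (\<rho> x) x + V \<mu> (\<rho> y) y))"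
  proof (intro allI impI)
    fix x y y' assume h: "dist y y' \<le> (\<rho> x + dist x y) / 2"
    define Z where "Z = (dist y y' / \<rho> x) * (1 / (V \<mu> (\<rho> x) x + V \<mu> (\<rho> y) y))"
    have Z: "0 \<le> Z" unfolding Z_def using V_pos[of x] V_pos[of y] by (intro mult_nonneg_nonneg) auto
    have "\<bar>K x y - K x y'\<bar> \<le> Ciii * Z" using final_iii[OF h] unfolding Z_def by (simp add: mult.assoc)
    also have "\<dots> \<le> C * Z" using Cge(3) Z by (rule mult_right_mono)
    finally show "\<bar>K x y - K x y'\<bar> \<le> C * (dist y y' / \<rho> x) * (1 / (V \<mu> (\<rho> x) x + V \<mu> (\<rho> y) y))"
      unfolding Z_def by (simp add: mult.assoc)
  qed
  have P6: "\<forall>x x' y y'. dist x x' \<le> (\<rho> y + dist x y) / 3 \<and> dist y y' \<le> (\<rho> x + dist x y) / 3 \<longrightarrow>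
       \<bar>(K x y - K x y') - (K x' y - K x' y')\<bar>
         \<le> C * (dist x x' / \<rho> x) * (dist y y' / \<rho> x) * (1 / (V \<mu> (\<rho> x) x + V \<mu> (\<rho> y) y))"
  proof (intro allI impI)
    fix x x' y y' assume h: "dist x x' \<le> (\<rho> y + dist x y) / 3 \<and> dist y y' \<le> (\<rho> x + dist x y) / 3"
    define Z where "Z = (dist x x' / \<rho> x) * (dist y y' / \<rho> x) * (1 / (V \<mu> (\<rho> x) x + V \<mu> (\<rho> y) y))"
    have Z: "0 \<le> Z" unfolding Z_def using V_pos[of x] V_pos[of y] by (intro mult_nonneg_nonneg) auto
    have "\<bar>(K x y - K x y') - (K x' y - K x' y')\<bar> \<le> Civ * Z"
      using final_iv[of x x' y y'] h unfolding Z_def by (simp add: mult.assoc)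
    also have "\<dots> \<le> C * Z" using Cge(4) Z by (rule mult_right_mono)
    finally show "\<bar>(K x y - K x y') - (K x' y - K x' y')\<bar>
         \<le> C * (dist x x' / \<rho> x) * (dist y y' / \<rho> x) * (1 / (V \<mu> (\<rho> x) x + V \<mu> (\<rho> y) y))"
      unfolding Z_def by (simp add: mult.assoc)
  qed
  have P7: "\<forall>y. (\<lambda>x. K x y) \<in> borel_measurable \<mu> \<and> (\<integral>\<^sup>+ x. ennreal (K x y) \<partial>\<mu>) = 1"
    using K_meas K_total by blast
  show ?thesis
    apply (rule exI[of _ K], rule exI[of _ C])
    apply (intro conjI)
           apply (fact C0)
          apply (fact P1)
         apply (fact P2)
        apply (fact P3)
       apply (fact P4)
      apply (fact P5)
     apply (fact P6)
    apply (fact P7)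
    done
qed


end
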